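(* Let $N\ge1$, $\delta>0$, $0<s<1$ and let $G$ be an Orlicz function. Let $\{u_k\}_{k\in\mathbb{N}}\subset W^{s,G,\delta}(\mathbb{R}^N)$ with $\sup_k\|u_k\|_{s,G,\delta}<\infty$. Then there exists $u\in W^{s,G,\delta}(\mathbb{R}^N)$ such that, up to a subsequence, $u_k\to u$ in $L^G_{loc}(\mathbb{R}^N)$ (i.e. in $L^G(K)$ for every compact $K\subset\mathbb{R}^N$).
   Context: An Orlicz function is a function $G:[0,\infty)\to[0,\infty)$ that is continuous, convex, increasing, with $G(0)=0$, satisfies $G(2t)\le \mathfrak{c}\,G(t)$ for all $t\ge0$ for some $\mathfrak{c}>2$, and $\lim_{t\to0^+}G(t)/t=0$. For measurable $u$ set $\Phi_G(u)=\int_{\mathbb{R}^N}G(|u(x)|)\,dx$ and $\Psi_{s,G,\delta}(u)=\int_{\mathbb{R}^N}\int_{B(x,\delta)}G\big(\frac{|u(x)-u(y)|}{|x-y|^s}\big)\frac{dy\,dx}{|x-y|^N}$. $L^G(\mathbb{R}^N)=\{u \text{ measurable}:\Phi_G(u)<\infty\}$ with Luxemburg norm $\|u\|_G=\inf\{\lambda>0:\Phi_G(u/\lambda)\le1\}$; $W^{s,G,\delta}(\mathbb{R}^N)=\{u\in L^G(\mathbb{R}^N):\Psi_{s,G,\delta}(u)<\infty\}$ with norm $\|u\|_{s,G,\delta}=\|u\|_G+[u]_{s,G,\delta}$, where $[u]_{s,G,\delta}=\inf\{\lambda>0:\Psi_{s,G,\delta}(u/\lambda)\le1\}$. *)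

theory Defs
  imports "HOL-Analysis.Analysis"
begin

text \<open>Orlicz function G : [0,\<infinity>) \<rightarrow> [0,\<infinity>) (values on negative reals are irrelevant).\<close>
definition orlicz_function :: "(real \<Rightarrow> real) \<Rightarrow> bool" where
  "orlicz_function G \<longleftrightarrow>
     continuous_on {0..} G \<and>
     convex_on {0..} G \<and>
     mono_on {0..} G \<and>
     (\<forall>t\<ge>0. G t \<ge> 0) \<and>
     G 0 = 0 \<and>
     (\<exists>c>2. \<forall>t\<ge>0. G (2 * t) \<le> c * G t) \<and>
     ((\<lambda>t. G t / t) \<longlongrightarrow> 0) (at_right 0)"

definition Phi_on :: "'a::euclidean_space set \<Rightarrow> (real \<Rightarrow> real) \<Rightarrow> ('a \<Rightarrow> real) \<Rightarrow> ennreal" where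
  "Phi_on A G u = (\<integral>\<^sup>+ x \<in> A. ennreal (G \<bar>u x\<bar>) \<partial>lebesgue)"

abbreviation Phi :: "(real \<Rightarrow> real) \<Rightarrow> ('a::euclidean_space \<Rightarrow> real) \<Rightarrow> ennreal" where
  "Phi G u \<equiv> Phi_on UNIV G u"

definition Psi :: "real \<Rightarrow> (real \<Rightarrow> real) \<Rightarrow> real \<Rightarrow> ('a::euclidean_space \<Rightarrow> real) \<Rightarrow> ennreal" where
  "Psi s G \<delta> u = (\<integral>\<^sup>+ x. (\<integral>\<^sup>+ y \<in> ball x \<delta>.
       ennreal (G (\<bar>u x - u y\<bar> / dist x y powr s) / dist x y ^ DIM('a)) \<partial>lebesgue) \<partial>lebesgue)"

definition lux_norm_on :: "'a::euclidean_space set \<Rightarrow> (real \<Rightarrow> real) \<Rightarrow> ('a \<Rightarrow> real) \<Rightarrow> real" where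
  "lux_norm_on A G u = Inf {l. l > 0 \<and> Phi_on A G (\<lambda>x. u x / l) \<le> 1}"

abbreviation lux_norm :: "(real \<Rightarrow> real) \<Rightarrow> ('a::euclidean_space \<Rightarrow> real) \<Rightarrow> real" where
  "lux_norm G u \<equiv> lux_norm_on UNIV G u"

definition seminorm_sGd :: "real \<Rightarrow> (real \<Rightarrow> real) \<Rightarrow> real \<Rightarrow> ('a::euclidean_space \<Rightarrow> real) \<Rightarrow> real" where
  "seminorm_sGd s G \<delta> u = Inf {l. l > 0 \<and> Psi s G \<delta> (\<lambda>x. u x / l) \<le> 1}"

definition norm_sGd :: "real \<Rightarrow> (real \<Rightarrow> real) \<Rightarrow> real \<Rightarrow> ('a::euclidean_space \<Rightarrow> real) \<Rightarrow> real" where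
  "norm_sGd s G \<delta> u = lux_norm G u + seminorm_sGd s G \<delta> u"

definition LG :: "(real \<Rightarrow> real) \<Rightarrow> ('a::euclidean_space \<Rightarrow> real) set" where
  "LG G = {u. u \<in> borel_measurable lebesgue \<and> Phi G u < \<infinity>}"

definition W_sGd :: "real \<Rightarrow> (real \<Rightarrow> real) \<Rightarrow> real \<Rightarrow> ('a::euclidean_space \<Rightarrow> real) set" where
  "W_sGd s G \<delta> = {u. u \<in> LG G \<and> Psi s G \<delta> u < \<infinity>}"

end

theory Submission
  imports Defs "HOL-Library.Diagonal_Subsequence"
begin

lemma sigma_finite_lebesgue: "sigma_finite_measure (lebesgue :: 'a::euclidean_space measure)"
proof
  obtain A :: "'a set set" where A: "countable A" "A \<subseteq> sets lborel" "\<Union>A = space lborel"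
     "\<forall>a\<in>A. emeasure lborel a \<noteq> \<infinity>"
    using sigma_finite_measure.sigma_finite_countable[OF sigma_finite_lborel] by blast
  show "\<exists>A::'a set set. countable A \<and> A \<subseteq> sets lebesgue \<and> \<Union>A = space lebesgue \<and> (\<forall>a\<in>A. emeasure lebesgue a \<noteq> \<infinity>)"
    using A by (intro exI[of _ A]) (auto simp: emeasure_completion main_part_sets subset_eq)
qed

lemma id_lebesgue_borel: "(\<lambda>x. x) \<in> (lebesgue :: 'a::euclidean_space measure) \<rightarrow>\<^sub>M borel"
  by (rule measurable_completion) (simp add: measurable_ident_sets)

lemma fst_lebesgue_borel: "(\<lambda>p. fst p :: 'a::euclidean_space) \<in> borel_measurable (lebesgue \<Otimes>\<^sub>M (M :: 'b measure))"
  for M :: "'b measure"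
  by (rule measurable_compose[OF measurable_fst id_lebesgue_borel, unfolded o_def])


definition psiF :: "real \<Rightarrow> (real\<Rightarrow>real) \<Rightarrow> real \<Rightarrow> ('a::euclidean_space \<Rightarrow> real) \<Rightarrow> 'a \<Rightarrow> 'a \<Rightarrow> ennreal" where
 "psiF s G \<delta> u x y = ennreal (G (\<bar>u x - u y\<bar> / dist x y powr s) / dist x y ^ DIM('a)) * indicator (ball x \<delta>) y"

lemma Psi_psiF: "Psi s G \<delta> u = (\<integral>\<^sup>+ x. (\<integral>\<^sup>+ y. psiF s G \<delta> u x y \<partial>lebesgue) \<partial>lebesgue)"
  unfolding Psi_def psiF_def ..

lemma Gabs_cont: fixes G :: "real \<Rightarrow> real" shows "continuous_on {0..} G \<Longrightarrow> continuous_on UNIV (\<lambda>t. G \<bar>t\<bar>)"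
proof -
  assume G: "continuous_on {0..} G"
  have r: "(\<lambda>x. \<bar>x\<bar>) ` UNIV \<subseteq> {0::real..}" by auto
  show ?thesis by (rule continuous_on_compose2[OF G continuous_on_rabs[OF continuous_on_id] r])
qed

lemma G_meas:
  fixes G :: "real \<Rightarrow> real" and f :: "'b \<Rightarrow> real"
  assumes "continuous_on {0..} G" "f \<in> borel_measurable M" "\<And>x. x \<in> space M \<Longrightarrow> f x \<ge> 0"
  shows "(\<lambda>x. G (f x)) \<in> borel_measurable M"
proof -
  have "(\<lambda>x. G \<bar>f x\<bar>) \<in> borel_measurable M"
    by (rule borel_measurable_continuous_on[OF Gabs_cont[OF assms(1)] assms(2)])
  then show ?thesis by (rule measurable_cong[THEN iffD1, rotated]) (use assms(3) in auto)
qed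

lemma psiF_meas:
  fixes u :: "'a::euclidean_space \<Rightarrow> real"
  assumes G: "continuous_on {0..} G" and u: "u \<in> borel_measurable lebesgue"
  shows "case_prod (psiF s G \<delta> u) \<in> borel_measurable (lebesgue \<Otimes>\<^sub>M lebesgue)"
proof -
  have f1: "(\<lambda>p. fst p :: 'a) \<in> borel_measurable (lebesgue \<Otimes>\<^sub>M lebesgue)" by (rule fst_lebesgue_borel)
  have f2: "(\<lambda>p. snd p :: 'a) \<in> borel_measurable (lebesgue \<Otimes>\<^sub>M lebesgue)"
    by (rule measurable_compose[OF measurable_snd id_lebesgue_borel, unfolded o_def])
  have u1: "(\<lambda>p. u (fst p)) \<in> borel_measurable (lebesgue \<Otimes>\<^sub>M lebesgue)"
    using u by measurable
  have u2: "(\<lambda>p. u (snd p)) \<in> borel_measurable (lebesgue \<Otimes>\<^sub>M lebesgue)"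
    using u by measurable
  have d: "(\<lambda>p. dist (fst p) (snd p :: 'a)) \<in> borel_measurable (lebesgue \<Otimes>\<^sub>M lebesgue)"
    using f1 f2 by (rule borel_measurable_dist)
  have a: "(\<lambda>p. \<bar>u (fst p) - u (snd p :: 'a)\<bar> / dist (fst p) (snd p :: 'a) powr s) \<in> borel_measurable (lebesgue \<Otimes>\<^sub>M lebesgue)"
    using u1 u2 d by measurable
  have g: "(\<lambda>p. G (\<bar>u (fst p) - u (snd p :: 'a)\<bar> / dist (fst p) (snd p :: 'a) powr s)) \<in> borel_measurable (lebesgue \<Otimes>\<^sub>M lebesgue)"
    by (rule G_meas[OF G a]) auto
  show ?thesis
    unfolding psiF_def case_prod_beta indicator_def mem_ball
    using g d by measurable
qed


locale orl =
  fixes G :: "real \<Rightarrow> real"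
  assumes orl: "orlicz_function G"
begin

lemma cont: "continuous_on {0..} G" using orl unfolding orlicz_function_def by blast
lemma conv: "convex_on {0..} G" using orl unfolding orlicz_function_def by blast
lemma nonneg: "0 \<le> t \<Longrightarrow> 0 \<le> G t" using orl unfolding orlicz_function_def by blast
lemma G0[simp]: "G 0 = 0" using orl unfolding orlicz_function_def by blast
lemma mono: "0 \<le> a \<Longrightarrow> a \<le> b \<Longrightarrow> G a \<le> G b"
  using orl unfolding orlicz_function_def mono_on_def by auto

definition cG where "cG = (SOME c. c > 2 \<and> (\<forall>t\<ge>0. G (2 * t) \<le> c * G t))"

lemma cG: "cG > 2" "\<And>t. t \<ge> 0 \<Longrightarrow> G (2 * t) \<le> cG * G t"
proof -
  have "\<exists>c. c > 2 \<and> (\<forall>t\<ge>0. G (2 * t) \<le> c * G t)" using orl unfolding orlicz_function_def by blast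
  then have "cG > 2 \<and> (\<forall>t\<ge>0. G (2 * t) \<le> cG * G t)" unfolding cG_def by (rule someI_ex)
  then show "cG > 2" "\<And>t. t \<ge> 0 \<Longrightarrow> G (2 * t) \<le> cG * G t" by auto
qed

lemma scale: assumes "0 \<le> a" "a \<le> 1" "0 \<le> t" shows "G (a * t) \<le> a * G t"
proof -
  have H: "\<forall>x\<in>{0..}. \<forall>y\<in>{0..}. \<forall>u\<ge>0. \<forall>v\<ge>0. u + v = 1 \<longrightarrow> G (u * x + v * y) \<le> u * G x + v * G y"
    using conv unfolding convex_on_def by auto
  have "G (a * t + (1 - a) * 0) \<le> a * G t + (1 - a) * G 0"
    by (rule H[rule_format]) (use assms in auto)
  then show ?thesis by simp
qed

lemma pow2: "0 \<le> t \<Longrightarrow> G (2 ^ m * t) \<le> cG ^ m * G t"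
proof (induction m)
  case 0 then show ?case by simp
next
  case (Suc m)
  have "G (2 ^ Suc m * t) = G (2 * (2 ^ m * t))" by (simp add: algebra_simps)
  also have "\<dots> \<le> cG * G (2 ^ m * t)" using cG(2) Suc.prems by simp
  also have "\<dots> \<le> cG * (cG ^ m * G t)" using Suc cG(1) by (intro mult_left_mono) auto
  finally show ?case by simp
qed

lemma big: assumes "0 \<le> l" obtains C where "C \<ge> 1" "\<And>t. 0 \<le> t \<Longrightarrow> G (l * t) \<le> C * G t"
proof -
  obtain m :: nat where m: "l \<le> 2 ^ m"
    using real_arch_pow[of 2 l] by (auto intro: less_imp_le)
  show ?thesis
  proof (rule that[of "cG ^ m"])
    show "1 \<le> cG ^ m" using cG(1) by (simp add: one_le_power)
    fix t :: real assume t: "0 \<le> t"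
    have "G (l * t) \<le> G (2 ^ m * t)" using t m assms by (intro mono mult_right_mono) auto
    also have "\<dots> \<le> cG ^ m * G t" using pow2 t by blast
    finally show "G (l * t) \<le> cG ^ m * G t" .
  qed
qed

lemma lin: assumes "1 \<le> t" shows "t * G 1 \<le> G t"
proof -
  have "G ((1 / t) * t) \<le> (1 / t) * G t" using assms by (intro scale) auto
  then show ?thesis using assms by (simp add: field_simps)
qed

lemma three: assumes "0 \<le> a" "0 \<le> b" "0 \<le> c"
  shows "G (a + b + c) \<le> cG ^ 2 * (G a + G b + G c)"
proof -
  define m where "m = max a (max b c)"
  have m: "0 \<le> m" "a \<le> m" "b \<le> m" "c \<le> m" using assms unfolding m_def by auto
  have "G (a + b + c) \<le> G (2 ^ 2 * m)" using assms m by (intro mono) auto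
  also have "\<dots> \<le> cG ^ 2 * G m" using pow2 m by blast
  also have "G m \<le> G a + G b + G c"
    unfolding m_def using nonneg assms by (auto simp: max_def)
  then have "cG ^ 2 * G m \<le> cG ^ 2 * (G a + G b + G c)" by (intro mult_left_mono) auto
  finally show ?thesis .
qed

lemma degenerate: "(\<forall>t\<ge>0. G t = 0) \<or> (\<forall>t>0. 0 < G t)"
proof (rule ccontr)
  assume "\<not> ?thesis"
  then obtain t0 t1 where t0: "t0 > 0" "G t0 \<le> 0" and t1: "t1 \<ge> 0" "G t1 \<noteq> 0"
    by (auto simp: not_less)
  have G0': "G t0 = 0" using nonneg[of t0] t0 by auto
  obtain m :: nat where m: "t1 / t0 \<le> 2 ^ m"
    using real_arch_pow[of 2 "t1/t0"] by (auto intro: less_imp_le)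
  have "t1 \<le> 2 ^ m * t0" using m t0 by (simp add: field_simps)
  then have "G t1 \<le> G (2 ^ m * t0)" using t1 by (intro mono) auto
  also have "\<dots> \<le> cG ^ m * G t0" using pow2 t0 by auto
  finally have "G t1 \<le> 0" using G0' by simp
  then show False using nonneg[of t1] t1 by auto
qed

lemma Gabs_cont: "continuous_on UNIV (\<lambda>t. G \<bar>t\<bar>)" using Gabs_cont[OF cont] .

lemma G_tendsto0: "((\<lambda>t. G \<bar>t\<bar>) \<longlongrightarrow> 0) (at 0)"
proof -
  have "isCont (\<lambda>t. G \<bar>t\<bar>) 0" using Gabs_cont continuous_on_eq_continuous_at by blast
  then show ?thesis by (simp add: isCont_def)
qed

end

definition cube :: "real \<Rightarrow> ('a::euclidean_space \<Rightarrow> int) \<Rightarrow> 'a set" where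
  "cube e m = {x. \<forall>i\<in>Basis. of_int (m i) * e \<le> x \<bullet> i \<and> x \<bullet> i < (of_int (m i) + 1) * e}"

lemma cube_borel: "cube e m \<in> sets (borel :: 'a::euclidean_space measure)"
proof -
  have "cube e m = (\<Inter>i\<in>Basis. {x::'a. of_int (m i) * e \<le> x \<bullet> i} \<inter> {x. x \<bullet> i < (of_int (m i) + 1) * e})"
    unfolding cube_def by auto
  also have "\<dots> \<in> sets borel"
    by (intro sets.finite_INT finite_Basis sets.Int borel_closed borel_open closed_halfspace_component_ge open_halfspace_component_lt) auto
  finally show ?thesis .
qed

lemma emeasure_lebesgue_borel: "A \<in> sets borel \<Longrightarrow> emeasure lebesgue A = emeasure lborel A"
  by (simp add: emeasure_completion main_part_sets)

lemma cube_sets: "cube e m \<in> sets lebesgue"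
  by (rule sets_completionI_sets) (simp add: cube_borel)

lemma cube_measure:
  fixes m :: "'a::euclidean_space \<Rightarrow> int"
  assumes e: "e > 0"
  shows "emeasure lebesgue (cube e m) = ennreal (e ^ DIM('a))"
proof -
  define a :: 'a where "a = (\<Sum>i\<in>Basis. (of_int (m i) * e) *\<^sub>R i)"
  define b :: 'a where "b = (\<Sum>i\<in>Basis. ((of_int (m i) + 1) * e) *\<^sub>R i)"
  have a: "a \<bullet> i = of_int (m i) * e" if "i \<in> Basis" for i
    unfolding a_def using that by (simp add: inner_sum_left inner_Basis if_distrib cong: if_cong)
  have b: "b \<bullet> i = (of_int (m i) + 1) * e" if "i \<in> Basis" for i
    unfolding b_def using that by (simp add: inner_sum_left inner_Basis if_distrib cong: if_cong)
  have sub1: "box a b \<subseteq> cube e m"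
  proof
    fix x assume "x \<in> box a b"
    then have "a \<bullet> i < x \<bullet> i \<and> x \<bullet> i < b \<bullet> i" if "i \<in> Basis" for i using that by (simp add: mem_box)
    then show "x \<in> cube e m" unfolding cube_def using a b by (simp add: less_imp_le)
  qed
  have sub2: "cube e m \<subseteq> cbox a b"
  proof
    fix x assume "x \<in> cube e m"
    then show "x \<in> cbox a b" unfolding cube_def using a b by (simp add: mem_box less_imp_le)
  qed
  have pr: "(\<Prod>i\<in>(Basis::'a set). (b - a) \<bullet> i) = e ^ DIM('a)"
    using a b by (simp add: inner_diff_left algebra_simps)
  have ab: "\<forall>i\<in>Basis. a \<bullet> i \<le> b \<bullet> i" using a b e by auto
  have "emeasure lborel (box a b) \<le> emeasure lborel (cube e m)"
    using sub1 cube_borel by (intro emeasure_mono) auto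
  moreover have "emeasure lborel (cube e m) \<le> emeasure lborel (cbox a b)"
    using sub2 by (intro emeasure_mono) auto
  ultimately have "emeasure lborel (cube e m) = ennreal (e ^ DIM('a))"
    using pr ab by (simp add: emeasure_lborel_box_eq emeasure_lborel_cbox_eq antisym)
  then show ?thesis using cube_borel emeasure_lebesgue_borel by metis
qed

lemma cube_diam:
  fixes m :: "'a::euclidean_space \<Rightarrow> int"
  assumes "x \<in> cube e m" "y \<in> cube e m"
  shows "dist x y \<le> real DIM('a) * e"
proof -
  have "\<bar>(x - y) \<bullet> i\<bar> \<le> e" if "i \<in> Basis" for i
  proof -
    have "of_int (m i) * e \<le> x \<bullet> i" "x \<bullet> i < (of_int (m i) + 1) * e"
         "of_int (m i) * e \<le> y \<bullet> i" "y \<bullet> i < (of_int (m i) + 1) * e"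
      using assms that unfolding cube_def by auto
    then show ?thesis by (simp add: inner_diff_left abs_le_iff algebra_simps)
  qed
  then have "(\<Sum>i\<in>Basis. \<bar>(x - y) \<bullet> i\<bar>) \<le> (\<Sum>i\<in>(Basis::'a set). e)"
    by (intro sum_mono) auto
  then show ?thesis using norm_le_l1[of "x - y"] by (simp add: dist_norm)
qed

lemma cube_disj:
  fixes m m' :: "'a::euclidean_space \<Rightarrow> int"
  assumes e: "e > 0" and "i \<in> Basis" "m i \<noteq> m' i"
  shows "cube e m \<inter> cube e m' = {}"
proof (rule ccontr)
  assume "cube e m \<inter> cube e m' \<noteq> {}"
  then obtain x where x: "x \<in> cube e m" "x \<in> cube e m'" by auto
  have "of_int (m i) * e \<le> x \<bullet> i" "x \<bullet> i < (of_int (m i) + 1) * e"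
       "of_int (m' i) * e \<le> x \<bullet> i" "x \<bullet> i < (of_int (m' i) + 1) * e"
    using x assms unfolding cube_def by auto
  then have "of_int (m i) * e < (of_int (m' i) + 1) * e" "of_int (m' i) * e < (of_int (m i) + 1) * e"
    by linarith+
  then have "of_int (m i) < (of_int (m' i) + 1 :: real)" "of_int (m' i) < (of_int (m i) + 1 :: real)"
    using e by (simp_all add: mult_less_cancel_right)
  then have "m i < m' i + 1" "m' i < m i + 1" by linarith+
  then show False using assms by linarith
qed

definition cidx :: "real \<Rightarrow> real \<Rightarrow> ('a::euclidean_space \<Rightarrow> int) set" where
  "cidx e R = PiE Basis (\<lambda>_. {- (\<lceil>R / e\<rceil> + 1) .. \<lceil>R / e\<rceil> + 1})"

lemma cidx_finite: "finite (cidx e R)"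
  unfolding cidx_def by (intro finite_PiE) auto

lemma cidx_disj: "e > 0 \<Longrightarrow> disjoint_family_on (cube e) (cidx e R)"
proof (unfold disjoint_family_on_def, intro ballI impI)
  fix m n assume e: "e > 0" and m: "m \<in> cidx e R" and n: "n \<in> cidx e R" and mn: "m \<noteq> n"
  then obtain i where "m i \<noteq> n i" by auto
  moreover have "i \<in> Basis"
  proof (rule ccontr)
    assume "i \<notin> Basis"
    then have "m i = undefined" "n i = undefined" using m n unfolding cidx_def by (auto simp: PiE_def extensional_def)
    then show False using calculation by simp
  qed
  ultimately show "cube e m \<inter> cube e n = {}" using cube_disj e by blast
qed

lemma cidx_cover:
  fixes x :: "'a::euclidean_space"
  assumes e: "e > 0" and x: "x \<in> cball 0 R"
  shows "\<exists>m\<in>cidx e R. x \<in> cube e m"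
proof -
  define m where "m = restrict (\<lambda>i. \<lfloor>x \<bullet> i / e\<rfloor>) (Basis :: 'a set)"
  have xi: "\<bar>x \<bullet> i\<bar> \<le> R" if "i \<in> Basis" for i
    using x that Basis_le_norm[OF that, of x] by (auto simp: dist_norm)
  have "m \<in> cidx e R"
    unfolding cidx_def m_def
  proof (intro restrict_PiE_iff[THEN iffD2] ballI)
    fix i :: 'a assume i: "i \<in> Basis"
    have h1: "x \<bullet> i / e \<le> R / e" "- (R / e) \<le> x \<bullet> i / e"
    proof -
      have "x \<bullet> i \<le> R" "-R \<le> x \<bullet> i" using xi[OF i] by auto
      then have "x \<bullet> i / e \<le> R / e" "(-R) / e \<le> x \<bullet> i / e" using e divide_right_mono[of "x \<bullet> i" R e] divide_right_mono[of "-R" "x \<bullet> i" e] by linarith+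
      then show "x \<bullet> i / e \<le> R / e" "- (R / e) \<le> x \<bullet> i / e" by auto
    qed
    have "\<lfloor>x \<bullet> i / e\<rfloor> \<le> \<lceil>R / e\<rceil> + 1" using h1 by linarith
    moreover have "- (\<lceil>R / e\<rceil> + 1) \<le> \<lfloor>x \<bullet> i / e\<rfloor>" using h1 by linarith
    ultimately show "\<lfloor>x \<bullet> i / e\<rfloor> \<in> {- (\<lceil>R / e\<rceil> + 1)..\<lceil>R / e\<rceil> + 1}" by auto
  qed
  moreover have "x \<in> cube e m"
    unfolding cube_def m_def
  proof (intro CollectI ballI)
    fix i :: 'a assume i: "i \<in> Basis"
    have "of_int \<lfloor>x \<bullet> i / e\<rfloor> \<le> x \<bullet> i / e" "x \<bullet> i / e < of_int \<lfloor>x \<bullet> i / e\<rfloor> + 1" by linarith+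
    then have "of_int \<lfloor>x \<bullet> i / e\<rfloor> * e \<le> (x \<bullet> i / e) * e" "(x \<bullet> i / e) * e < (of_int \<lfloor>x \<bullet> i / e\<rfloor> + 1) * e"
      using e by (intro mult_right_mono mult_strict_right_mono; simp)+
    then show "real_of_int (restrict (\<lambda>i. \<lfloor>x \<bullet> i / e\<rfloor>) Basis i) * e \<le> x \<bullet> i \<and>
          x \<bullet> i < (real_of_int (restrict (\<lambda>i. \<lfloor>x \<bullet> i / e\<rfloor>) Basis i) + 1) * e"
      using i e by simp
  qed
  ultimately show ?thesis by blast
qed


lemma markov3:
  fixes g :: "'a::euclidean_space \<Rightarrow> ennreal"
  assumes g[measurable]: "g \<in> borel_measurable lebesgue" and Q[measurable]: "Q \<in> sets lebesgue"
    and m: "emeasure lebesgue Q < \<infinity>" and I: "(\<integral>\<^sup>+x\<in>Q. g x \<partial>lebesgue) < \<infinity>"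
  shows "3 * emeasure lebesgue ({x\<in>space lebesgue. 3 * (\<integral>\<^sup>+x\<in>Q. g x \<partial>lebesgue) < g x * emeasure lebesgue Q} \<inter> Q)
           \<le> emeasure lebesgue Q"
proof -
  define I where "I = (\<integral>\<^sup>+x\<in>Q. g x \<partial>lebesgue)"
  define m where "m = emeasure lebesgue Q"
  define E where "E = {x\<in>space lebesgue. 3 * I < g x * m} \<inter> Q"
  have E[measurable]: "E \<in> sets lebesgue" unfolding E_def by measurable
  have EQ: "E \<subseteq> Q" unfolding E_def by auto
  have "3 * emeasure lebesgue E \<le> m"
  proof (cases "I = 0")
    case True
    have "emeasure lebesgue {x\<in>space lebesgue. g x * indicator Q x \<noteq> 0} = 0"
      using True unfolding I_def by (subst nn_integral_0_iff[symmetric]) auto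
    moreover have "E \<subseteq> {x\<in>space lebesgue. g x * indicator Q x \<noteq> 0}"
      unfolding E_def using True by auto
    moreover have "{x\<in>space lebesgue. g x * indicator Q x \<noteq> 0} \<in> sets lebesgue" by measurable
    ultimately have "emeasure lebesgue E \<le> 0" using emeasure_mono by metis
    then have "emeasure lebesgue E = 0" by simp
    then show ?thesis by simp
  next
    case I0: False
    show ?thesis
    proof (cases "m = 0")
      case True
      then have "emeasure lebesgue E \<le> 0" unfolding m_def using EQ emeasure_mono[OF EQ Q] by simp
      then have "emeasure lebesgue E = 0" by simp
      then show ?thesis by simp
    next
      case m0: False
      obtain Ir where Ir0: "I = ennreal Ir" "Ir \<ge> 0" using I unfolding I_def[symmetric] by (cases I) auto
      then have Ir: "I = ennreal Ir" "Ir > 0" using I0 by auto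
      obtain mr where mr0: "m = ennreal mr" "mr \<ge> 0" using m unfolding m_def[symmetric] by (cases m) auto
      then have mr: "m = ennreal mr" "mr > 0" using m0 by auto
      define c where "c = ennreal (mr / (3 * Ir))"
      have sub: "E \<subseteq> {x\<in>Q. 1 \<le> c * g x}"
      proof
        fix x assume x: "x \<in> E"
        then have lt: "3 * ennreal Ir < g x * ennreal mr" "x \<in> Q" unfolding E_def Ir mr by auto
        have "1 \<le> c * g x"
        proof (cases "g x = \<infinity>")
          case True
          then show ?thesis unfolding c_def using Ir mr by (simp add: ennreal_mult_top)
        next
          case False
          then obtain gr where gr: "g x = ennreal gr" "gr \<ge> 0" using False by (cases "g x") auto
          have e1: "ennreal (3 * Ir) = 3 * ennreal Ir" using Ir by (simp add: ennreal_mult)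
          have e2: "ennreal (gr * mr) = g x * ennreal mr" using gr mr by (simp add: ennreal_mult)
          have "ennreal (3 * Ir) < ennreal (gr * mr)" unfolding e1 e2 by (rule lt(1))
          then have "3 * Ir < gr * mr" using Ir by (subst (asm) ennreal_less_iff) auto
          then have "1 \<le> mr / (3 * Ir) * gr" using Ir by (simp add: le_divide_eq mult.commute)
          then have "ennreal 1 \<le> ennreal (mr / (3 * Ir) * gr)" by (rule ennreal_leI)
          also have "ennreal (mr / (3 * Ir) * gr) = c * g x" unfolding c_def gr
            using Ir mr gr ennreal_mult[of "mr / (3 * Ir)" gr] by simp
          finally show ?thesis by simp
        qed
        then show "x \<in> {x\<in>Q. 1 \<le> c * g x}" using lt by auto
      qed
      have "{x\<in>Q. 1 \<le> c * g x} = {x\<in>space lebesgue. 1 \<le> c * g x} \<inter> Q" by auto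
      also have "\<dots> \<in> sets lebesgue" by measurable
      finally have "emeasure lebesgue E \<le> emeasure lebesgue {x\<in>Q. 1 \<le> c * g x}"
        using sub by (intro emeasure_mono)
      also have "\<dots> \<le> c * I" unfolding I_def
        by (rule nn_integral_Markov_inequality) auto
      also have "\<dots> = ennreal (mr / 3)" unfolding c_def Ir using Ir ennreal_mult[of "mr / (3 * Ir)" Ir] mr by simp
      finally have "3 * emeasure lebesgue E \<le> 3 * ennreal (mr / 3)" by (simp add: mult_left_mono)
      also have "\<dots> = m" unfolding mr using ennreal_mult[of 3 "mr/3"] mr by simp
      finally show ?thesis .
    qed
  qed
  then show ?thesis unfolding E_def I_def m_def .
qed


lemma pick2:
  fixes g1 g2 :: "'a::euclidean_space \<Rightarrow> ennreal"
  assumes g1[measurable]: "g1 \<in> borel_measurable lebesgue" and g2[measurable]: "g2 \<in> borel_measurable lebesgue"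
    and Q[measurable]: "Q \<in> sets lebesgue"
    and m0: "0 < emeasure lebesgue Q" and m: "emeasure lebesgue Q < \<infinity>"
    and I1: "(\<integral>\<^sup>+x\<in>Q. g1 x \<partial>lebesgue) < \<infinity>" and I2: "(\<integral>\<^sup>+x\<in>Q. g2 x \<partial>lebesgue) < \<infinity>"
  shows "\<exists>x\<in>Q. g1 x * emeasure lebesgue Q \<le> 3 * (\<integral>\<^sup>+x\<in>Q. g1 x \<partial>lebesgue) \<and>
                g2 x * emeasure lebesgue Q \<le> 3 * (\<integral>\<^sup>+x\<in>Q. g2 x \<partial>lebesgue)"
proof (rule ccontr)
  assume *: "\<not> ?thesis"
  define m where "m = emeasure lebesgue Q"
  define E1 where "E1 = {x\<in>space lebesgue. 3 * (\<integral>\<^sup>+x\<in>Q. g1 x \<partial>lebesgue) < g1 x * emeasure lebesgue Q} \<inter> Q"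
  define E2 where "E2 = {x\<in>space lebesgue. 3 * (\<integral>\<^sup>+x\<in>Q. g2 x \<partial>lebesgue) < g2 x * emeasure lebesgue Q} \<inter> Q"
  have E1[measurable]: "E1 \<in> sets lebesgue" unfolding E1_def by measurable
  have E2[measurable]: "E2 \<in> sets lebesgue" unfolding E2_def by measurable
  have e1: "3 * emeasure lebesgue E1 \<le> m" unfolding E1_def m_def by (rule markov3) (use assms in auto)
  have e2: "3 * emeasure lebesgue E2 \<le> m" unfolding E2_def m_def by (rule markov3) (use assms in auto)
  have "Q \<subseteq> E1 \<union> E2" using * unfolding E1_def E2_def by (auto simp: not_le)
  then have "m \<le> emeasure lebesgue (E1 \<union> E2)" unfolding m_def by (intro emeasure_mono) auto
  also have "\<dots> \<le> emeasure lebesgue E1 + emeasure lebesgue E2" by (rule emeasure_subadditive) auto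
  finally have "3 * m \<le> 3 * emeasure lebesgue E1 + 3 * emeasure lebesgue E2"
    by (metis distrib_left mult_left_mono zero_le)
  also have "\<dots> \<le> m + m" using e1 e2 by (rule add_mono)
  finally have le: "3 * m \<le> m + m" .
  obtain mr where mr: "m = ennreal mr" "mr \<ge> 0" using m unfolding m_def[symmetric] by (cases m) auto
  have "mr > 0" using m0 mr unfolding m_def by auto
  have a: "ennreal (3 * mr) = 3 * m" using mr ennreal_mult[of 3 mr] by simp
  have b: "ennreal (mr + mr) = m + m" using ennreal_plus[OF mr(2) mr(2)] mr(1) by simp
  have "ennreal (3 * mr) \<le> ennreal (mr + mr)" unfolding a b by (rule le)
  then have "3 * mr \<le> mr + mr" using mr by simp
  then show False using \<open>mr > 0\<close> by simp
qed

locale fr = orl G for G :: "real \<Rightarrow> real" +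
  fixes s \<delta> :: real
  assumes s0: "0 < s" and s1: "s < 1" and d0: "0 < \<delta>"
begin

definition inr :: "('a::euclidean_space \<Rightarrow> real) \<Rightarrow> 'a \<Rightarrow> ennreal" where
  "inr f x = (\<integral>\<^sup>+y. psiF s G \<delta> f x y \<partial>lebesgue)"

lemma Psi_inr: "Psi s G \<delta> f = (\<integral>\<^sup>+x. inr f x \<partial>lebesgue)"
  by (simp add: Psi_psiF inr_def)

lemma inr_meas[measurable]: "f \<in> borel_measurable lebesgue \<Longrightarrow> inr f \<in> borel_measurable lebesgue"
  unfolding inr_def
  by (rule sigma_finite_measure.borel_measurable_nn_integral[OF sigma_finite_lebesgue psiF_meas[OF cont]])

lemma psiF_meas_y[measurable]: "f \<in> borel_measurable lebesgue \<Longrightarrow> (\<lambda>y. psiF s G \<delta> f x y) \<in> borel_measurable lebesgue"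
  using measurable_compose[OF measurable_Pair1'[of x lebesgue lebesgue] psiF_meas[OF cont, of f s \<delta>]] by simp

lemma Gf_meas[measurable]: "f \<in> borel_measurable M \<Longrightarrow> (\<lambda>x. G \<bar>f x\<bar>) \<in> borel_measurable M"
  by (rule G_meas[OF cont]) auto

lemma pointwise:
  fixes f :: "'a::euclidean_space \<Rightarrow> real"
  assumes d: "0 < d" "d \<le> 1" "d < \<delta>" and xy: "dist x y \<le> d"
  shows "ennreal (G \<bar>f y - f x\<bar>) \<le> ennreal (d powr (s + DIM('a))) * psiF s G \<delta> f x y"
proof (cases "x = y")
  case True then show ?thesis by simp
next
  case False
  define r where "r = dist x y"
  have r: "0 < r" "r \<le> d" "r < \<delta>" using False xy d unfolding r_def by auto
  define q where "q = \<bar>f x - f y\<bar> / r powr s"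
  have q: "0 \<le> q" unfolding q_def by simp
  have ps: "psiF s G \<delta> f x y = ennreal (G q / r ^ DIM('a))"
    unfolding psiF_def q_def r_def using r by (simp add: indicator_def mem_ball r_def)
  have rs: "0 < r powr s" "r powr s \<le> 1" using r d s0 by (auto intro!: powr_le1)
  have eq: "\<bar>f y - f x\<bar> = r powr s * q" unfolding q_def using rs by (simp add: abs_minus_commute)
  have "G \<bar>f y - f x\<bar> \<le> r powr s * G q" unfolding eq using rs q by (intro scale) auto
  also have "r powr s * G q = r powr (s + DIM('a)) * (G q / r ^ DIM('a))"
    using r by (simp add: powr_add powr_realpow)
  also have "\<dots> \<le> d powr (s + DIM('a)) * (G q / r ^ DIM('a))"
    using r s0 nonneg[OF q] by (intro mult_right_mono powr_mono2) auto
  finally have "ennreal (G \<bar>f y - f x\<bar>) \<le> ennreal (d powr (s + DIM('a)) * (G q / r ^ DIM('a)))"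
    by (rule ennreal_leI)
  also have "\<dots> = ennreal (d powr (s + DIM('a))) * psiF s G \<delta> f x y"
    unfolding ps by (rule ennreal_mult) (use r nonneg[OF q] in auto)
  finally show ?thesis .
qed

lemma core:
  fixes f :: "'a::euclidean_space \<Rightarrow> real" and Q :: "'a set"
  assumes f[measurable]: "f \<in> borel_measurable lebesgue" and Q[measurable]: "Q \<in> sets lebesgue"
    and mu: "0 < mu" "ennreal mu \<le> emeasure lebesgue Q" and m: "emeasure lebesgue Q < \<infinity>"
    and d: "0 < d" "d \<le> 1" "d < \<delta>" and diam: "\<And>x y. x \<in> Q \<Longrightarrow> y \<in> Q \<Longrightarrow> dist x y \<le> d"
    and P: "(\<integral>\<^sup>+x\<in>Q. ennreal (G \<bar>f x\<bar>) \<partial>lebesgue) < \<infinity>"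
    and S: "(\<integral>\<^sup>+x\<in>Q. inr f x \<partial>lebesgue) < \<infinity>"
  shows "\<exists>a. ennreal (G \<bar>a\<bar> * mu) \<le> 3 * (\<integral>\<^sup>+x\<in>Q. ennreal (G \<bar>f x\<bar>) \<partial>lebesgue) \<and>
             (\<integral>\<^sup>+y\<in>Q. ennreal (G \<bar>f y - a\<bar>) \<partial>lebesgue)
               \<le> ennreal (3 * d powr (s + DIM('a)) / mu) * (\<integral>\<^sup>+x\<in>Q. inr f x \<partial>lebesgue)"
proof -
  define m where "m = emeasure lebesgue Q"
  define PP where "PP = (\<integral>\<^sup>+x\<in>Q. ennreal (G \<bar>f x\<bar>) \<partial>lebesgue)"
  define SS where "SS = (\<integral>\<^sup>+x\<in>Q. inr f x \<partial>lebesgue)"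
  define D where "D = d powr (s + DIM('a))"
  have m0: "0 < emeasure lebesgue Q" using mu by (metis ennreal_less_zero_iff order_less_le_trans)
  obtain x0 where x0: "x0 \<in> Q" "ennreal (G \<bar>f x0\<bar>) * m \<le> 3 * PP" "inr f x0 * m \<le> 3 * SS"
    using pick2[of "\<lambda>x. ennreal (G \<bar>f x\<bar>)" "inr f" Q] m0 m P S unfolding m_def PP_def SS_def by auto
  have 1: "ennreal (G \<bar>f x0\<bar> * mu) \<le> 3 * PP"
  proof -
    have "ennreal (G \<bar>f x0\<bar> * mu) = ennreal (G \<bar>f x0\<bar>) * ennreal mu"
      using nonneg[of "\<bar>f x0\<bar>"] mu by (simp add: ennreal_mult)
    also have "\<dots> \<le> ennreal (G \<bar>f x0\<bar>) * m" unfolding m_def using mu by (intro mult_left_mono) auto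
    finally show ?thesis using x0 by simp
  qed
  define X where "X = (\<integral>\<^sup>+y\<in>Q. ennreal (G \<bar>f y - f x0\<bar>) \<partial>lebesgue)"
  have "X \<le> (\<integral>\<^sup>+y. ennreal D * psiF s G \<delta> f x0 y \<partial>lebesgue)"
    unfolding X_def
  proof (rule nn_integral_mono)
    fix y
    show "ennreal (G \<bar>f y - f x0\<bar>) * indicator Q y \<le> ennreal D * psiF s G \<delta> f x0 y"
    proof (cases "y \<in> Q")
      case True
      then show ?thesis using pointwise[OF d diam[OF x0(1) True], of f] unfolding D_def by simp
    qed simp
  qed
  also have "\<dots> = ennreal D * inr f x0" unfolding inr_def by (rule nn_integral_cmult) measurable
  finally have X1: "X \<le> ennreal D * inr f x0" .
  have "X * ennreal mu \<le> X * m" unfolding m_def using mu by (intro mult_left_mono) auto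
  also have "\<dots> \<le> ennreal D * inr f x0 * m" using X1 by (intro mult_right_mono) auto
  also have "\<dots> \<le> ennreal D * (3 * SS)" using x0(3) by (simp add: mult.assoc mult_left_mono)
  finally have X2: "X * ennreal mu \<le> ennreal D * (3 * SS)" .
  have "X = X * ennreal mu * ennreal (1 / mu)"
    using mu by (simp add: mult.assoc ennreal_mult[symmetric])
  also have "\<dots> \<le> ennreal D * (3 * SS) * ennreal (1 / mu)" using X2 by (intro mult_right_mono) auto
  also have "\<dots> = ennreal (3 * D / mu) * SS"
  proof -
    have D0: "0 \<le> D" unfolding D_def by simp
    have e1: "ennreal (3 * D / mu) = ennreal ((D * 3) * (1 / mu))" by (simp add: mult.commute)
    have e2: "ennreal ((D * 3) * (1 / mu)) = ennreal (D * 3) * ennreal (1 / mu)"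
      using D0 mu by (intro ennreal_mult) auto
    have e3: "ennreal (D * 3) = ennreal D * 3" using D0 ennreal_mult[of D 3] by simp
    have "ennreal (3 * D / mu) = ennreal D * 3 * ennreal (1 / mu)" unfolding e1 e2 e3 ..
    then show ?thesis by (simp add: mult_ac)
  qed
  finally show ?thesis using 1 unfolding X_def D_def PP_def SS_def by blast
qed

end


lemma finite_bolzano:
  fixes X :: "nat \<Rightarrow> 'i \<Rightarrow> real"
  assumes "finite I" "\<And>k i. i \<in> I \<Longrightarrow> \<bar>X k i\<bar> \<le> B"
  shows "\<exists>r. strict_mono r \<and> (\<forall>i\<in>I. convergent (\<lambda>k. X (r k) i))"
  using assms
proof (induction I rule: finite_induct)
  case empty show ?case by (intro exI[of _ id]) (auto simp: strict_mono_def)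
next
  case (insert i I)
  have b: "\<And>k j. j \<in> I \<Longrightarrow> \<bar>X k j\<bar> \<le> B" using insert.prems by simp
  obtain r where r: "strict_mono r" "\<forall>j\<in>I. convergent (\<lambda>k. X (r k) j)" using insert.IH[OF b] by blast
  obtain t where t: "strict_mono t" "monoseq (\<lambda>n. X (r (t n)) i)" using seq_monosub[of "\<lambda>n. X (r n) i"] by blast
  have "Bseq (\<lambda>n. X (r (t n)) i)" by (rule BseqI'[of _ B]) (use insert.prems in simp)
  then have conv: "convergent (\<lambda>n. X (r (t n)) i)" using t(2) by (rule Bseq_monoseq_convergent)
  have "convergent (\<lambda>k. X (r (t k)) j)" if "j \<in> I" for j
    using convergent_subseq_convergent[OF r(2)[rule_format, OF that] t(1)] by (simp add: o_def)
  note c2 = this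
  show ?case
  proof (intro exI[of _ "r \<circ> t"] conjI ballI)
    show "strict_mono (r \<circ> t)" using strict_mono_o[OF r(1) t(1)] .
    fix j assume "j \<in> insert i I"
    then show "convergent (\<lambda>k. X ((r \<circ> t) k) j)" using conv c2 by (cases "j = i") auto
  qed
qed

lemma sum_ind_le1:
  assumes "finite Ix" "disjoint_family_on Q Ix"
  shows "(\<Sum>m\<in>Ix. indicator (Q m) x) \<le> (1::ennreal)"
proof -
  have "(\<Sum>m\<in>Ix. indicator (Q m) x) = (indicator (\<Union>(Q ` Ix)) x :: ennreal)"
    using indicator_UN_disjoint[OF assms, of x] by metis
  then show ?thesis by (cases "x \<in> \<Union>(Q ` Ix)") auto
qed

lemma sum_sub_le:
  fixes h :: "'a \<Rightarrow> ennreal"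
  assumes h[measurable]: "h \<in> borel_measurable M" and Ix: "finite Ix" "disjoint_family_on Q Ix"
    and Q[measurable]: "\<And>m. m \<in> Ix \<Longrightarrow> Q m \<in> sets M"
  shows "(\<Sum>m\<in>Ix. \<integral>\<^sup>+x\<in>Q m. h x \<partial>M) \<le> (\<integral>\<^sup>+x. h x \<partial>M)"
proof -
  have "(\<Sum>m\<in>Ix. \<integral>\<^sup>+x\<in>Q m. h x \<partial>M) = (\<integral>\<^sup>+x. (\<Sum>m\<in>Ix. h x * indicator (Q m) x) \<partial>M)"
    by (rule nn_integral_sum[symmetric]) (use Q in measurable)
  also have "\<dots> = (\<integral>\<^sup>+x. h x * (\<Sum>m\<in>Ix. indicator (Q m) x) \<partial>M)"
    by (simp add: sum_distrib_left)
  also have "\<dots> \<le> (\<integral>\<^sup>+x. h x * 1 \<partial>M)"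
    by (intro nn_integral_mono mult_left_mono sum_ind_le1[OF Ix]) auto
  finally show ?thesis by simp
qed

lemma cover_le:
  fixes h :: "'a \<Rightarrow> ennreal"
  assumes h[measurable]: "h \<in> borel_measurable M" and Ix: "finite Ix"
    and Q[measurable]: "\<And>m. m \<in> Ix \<Longrightarrow> Q m \<in> sets M"
    and cov: "A \<subseteq> (\<Union>m\<in>Ix. Q m)"
  shows "(\<integral>\<^sup>+x\<in>A. h x \<partial>M) \<le> (\<Sum>m\<in>Ix. \<integral>\<^sup>+x\<in>Q m. h x \<partial>M)"
proof -
  have "(\<integral>\<^sup>+x\<in>A. h x \<partial>M) \<le> (\<integral>\<^sup>+x. h x * (\<Sum>m\<in>Ix. indicator (Q m) x) \<partial>M)"
  proof (intro nn_integral_mono mult_left_mono)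
    fix x
    show "indicator A x \<le> (\<Sum>m\<in>Ix. indicator (Q m) x :: ennreal)"
    proof (cases "x \<in> A")
      case True
      then obtain m where "m \<in> Ix" "x \<in> Q m" using cov by auto
      then have "indicator (Q m) x \<le> (\<Sum>m\<in>Ix. indicator (Q m) x :: ennreal)"
        by (intro member_le_sum Ix) auto
      then show ?thesis using True \<open>x \<in> Q m\<close> by simp
    qed simp
  qed auto
  also have "\<dots> = (\<integral>\<^sup>+x. (\<Sum>m\<in>Ix. h x * indicator (Q m) x) \<partial>M)"
    by (simp add: sum_distrib_left)
  also have "\<dots> = (\<Sum>m\<in>Ix. \<integral>\<^sup>+x\<in>Q m. h x \<partial>M)"
    by (rule nn_integral_sum) (use Q in measurable)
  finally show ?thesis .
qed


lemma aux1: fixes c p mu :: real assumes "0 \<le> c" "0 < mu"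
  shows "c * (p / (mu * (c + 1))) * mu = p * (c / (c + 1))"
proof -
  have "c + 1 \<noteq> 0" "mu \<noteq> 0" using assms by auto
  then show ?thesis by (simp add: divide_simps)
qed

context orl
begin

lemma G_small: assumes "0 < \<eta>" shows "\<exists>\<rho>>0. \<forall>t. \<bar>t\<bar> < \<rho> \<longrightarrow> G \<bar>t\<bar> < \<eta>"
proof -
  obtain \<rho> where \<rho>: "\<rho> > 0" "\<And>x. x \<noteq> 0 \<and> norm (x - 0) < \<rho> \<Longrightarrow> norm (G \<bar>x\<bar> - 0) < \<eta>"
    using G_tendsto0[unfolded LIM_eq] assms by blast
  have "G \<bar>t\<bar> < \<eta>" if "\<bar>t\<bar> < \<rho>" for t
  proof (cases "t = 0")
    case True then show ?thesis using assms by simp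
  next
    case False then show ?thesis using \<rho>(2)[of t] that nonneg[of "\<bar>t\<bar>"] by auto
  qed
  then show ?thesis using \<rho>(1) by blast
qed

lemma cauchy_fin:
  fixes Y :: "nat \<Rightarrow> 'i \<Rightarrow> real"
  assumes "finite Ix" "\<forall>m\<in>Ix. convergent (\<lambda>k. Y k m)" "0 < \<eta>"
  shows "\<exists>J. \<forall>j\<ge>J. \<forall>k\<ge>J. \<forall>m\<in>Ix. G \<bar>Y j m - Y k m\<bar> < \<eta>"
proof -
  obtain \<rho> where \<rho>: "\<rho> > 0" "\<And>t. \<bar>t\<bar> < \<rho> \<Longrightarrow> G \<bar>t\<bar> < \<eta>" using G_small[OF assms(3)] by blast
  have "eventually (\<lambda>J. \<forall>j\<ge>J. \<forall>k\<ge>J. G \<bar>Y j m - Y k m\<bar> < \<eta>) sequentially" if m: "m \<in> Ix" for m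
  proof -
    have "Cauchy (\<lambda>k. Y k m)" using assms(2) m by (simp add: convergent_Cauchy)
    then obtain M where M: "\<And>j k. j \<ge> M \<Longrightarrow> k \<ge> M \<Longrightarrow> dist (Y j m) (Y k m) < \<rho>"
      using \<rho>(1) unfolding Cauchy_def by blast
    show ?thesis unfolding eventually_sequentially
      by (intro exI[of _ M] allI impI) (use M \<rho>(2) in \<open>auto simp: dist_real_def\<close>)
  qed
  then have "eventually (\<lambda>J. \<forall>m\<in>Ix. \<forall>j\<ge>J. \<forall>k\<ge>J. G \<bar>Y j m - Y k m\<bar> < \<eta>) sequentially"
    by (intro eventually_ball_finite assms(1)) auto
  then obtain J where "\<forall>m\<in>Ix. \<forall>j\<ge>J. \<forall>k\<ge>J. G \<bar>Y j m - Y k m\<bar> < \<eta>"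
    unfolding eventually_sequentially by blast
  then show ?thesis by blast
qed

end

context fr
begin

lemma Phi_sub: "(\<integral>\<^sup>+x\<in>A. ennreal (G \<bar>f x\<bar>) \<partial>lebesgue) \<le> Phi G f"
  unfolding Phi_on_def by (intro nn_integral_mono) (auto simp: indicator_def)

lemma Psi_sub: "(\<integral>\<^sup>+x\<in>A. inr f x \<partial>lebesgue) \<le> Psi s G \<delta> f"
  unfolding Psi_inr by (intro nn_integral_mono) (auto simp: indicator_def)

lemma pair_est:
  fixes f1 f2 :: "'a::euclidean_space \<Rightarrow> real" and a1 a2 :: "('a \<Rightarrow> int) \<Rightarrow> real"
  assumes f1[measurable]: "f1 \<in> borel_measurable lebesgue" and f2[measurable]: "f2 \<in> borel_measurable lebesgue"
    and e: "0 < e" and ka: "0 \<le> ka" and eta: "0 \<le> eta"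
    and X1: "\<And>m. m \<in> cidx e R \<Longrightarrow> (\<integral>\<^sup>+y\<in>cube e m. ennreal (G \<bar>f1 y - a1 m\<bar>) \<partial>lebesgue) \<le> ennreal ka * (\<integral>\<^sup>+x\<in>cube e m. inr f1 x \<partial>lebesgue)"
    and X2: "\<And>m. m \<in> cidx e R \<Longrightarrow> (\<integral>\<^sup>+y\<in>cube e m. ennreal (G \<bar>f2 y - a2 m\<bar>) \<partial>lebesgue) \<le> ennreal ka * (\<integral>\<^sup>+x\<in>cube e m. inr f2 x \<partial>lebesgue)"
    and S1: "Psi s G \<delta> f1 \<le> 1" and S2: "Psi s G \<delta> f2 \<le> 1"
    and close: "\<And>m. m \<in> cidx e R \<Longrightarrow> G \<bar>a1 m - a2 m\<bar> \<le> eta"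
  shows "(\<integral>\<^sup>+x\<in>cball 0 R. ennreal (G \<bar>f1 x - f2 x\<bar>) \<partial>lebesgue)
           \<le> ennreal (cG^2 * (2 * ka + real (card (cidx e R :: ('a \<Rightarrow> int) set)) * eta * e ^ DIM('a)))"
proof -
  define Ix where "Ix = (cidx e R :: ('a \<Rightarrow> int) set)"
  define mu :: real where "mu = e ^ DIM('a)"
  have mu: "0 < mu" unfolding mu_def using e by simp
  have Ixf: "finite Ix" unfolding Ix_def by (rule cidx_finite)
  have Ixd: "disjoint_family_on (cube e) Ix" unfolding Ix_def using e by (rule cidx_disj)
  have cQ[measurable]: "cube e m \<in> sets lebesgue" for m :: "'a \<Rightarrow> int" by (rule cube_sets)
  have cov: "cball 0 R \<subseteq> (\<Union>m\<in>Ix. cube e m)" unfolding Ix_def using cidx_cover[OF e] by blast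
  define X1s where "X1s m = (\<integral>\<^sup>+y\<in>cube e m. ennreal (G \<bar>f1 y - a1 m\<bar>) \<partial>lebesgue)" for m
  define X2s where "X2s m = (\<integral>\<^sup>+y\<in>cube e m. ennreal (G \<bar>f2 y - a2 m\<bar>) \<partial>lebesgue)" for m
  have step1: "(\<integral>\<^sup>+x\<in>cball 0 R. ennreal (G \<bar>f1 x - f2 x\<bar>) \<partial>lebesgue)
     \<le> (\<Sum>m\<in>Ix. \<integral>\<^sup>+x\<in>cube e m. ennreal (G \<bar>f1 x - f2 x\<bar>) \<partial>lebesgue)"
    by (rule cover_le[OF _ Ixf _ cov]) measurable
  have step2: "(\<integral>\<^sup>+x\<in>cube e m. ennreal (G \<bar>f1 x - f2 x\<bar>) \<partial>lebesgue)
      \<le> ennreal (cG^2) * (X1s m + ennreal (eta * mu) + X2s m)" if m: "m \<in> Ix" for m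
  proof -
    have "(\<integral>\<^sup>+x\<in>cube e m. ennreal (G \<bar>f1 x - f2 x\<bar>) \<partial>lebesgue)
       \<le> (\<integral>\<^sup>+x. ennreal (cG^2) * (ennreal (G \<bar>f1 x - a1 m\<bar>) * indicator (cube e m) x
             + ennreal (G \<bar>a1 m - a2 m\<bar>) * indicator (cube e m) x
             + ennreal (G \<bar>f2 x - a2 m\<bar>) * indicator (cube e m) x) \<partial>lebesgue)"
    proof (intro nn_integral_mono)
      fix x
      show "ennreal (G \<bar>f1 x - f2 x\<bar>) * indicator (cube e m) x
         \<le> ennreal (cG^2) * (ennreal (G \<bar>f1 x - a1 m\<bar>) * indicator (cube e m) x
             + ennreal (G \<bar>a1 m - a2 m\<bar>) * indicator (cube e m) x
             + ennreal (G \<bar>f2 x - a2 m\<bar>) * indicator (cube e m) x)"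
      proof (cases "x \<in> cube e m")
        case True
        have "G \<bar>f1 x - f2 x\<bar> \<le> G (\<bar>f1 x - a1 m\<bar> + \<bar>a1 m - a2 m\<bar> + \<bar>f2 x - a2 m\<bar>)"
          by (intro mono) auto
        also have "\<dots> \<le> cG^2 * (G \<bar>f1 x - a1 m\<bar> + G \<bar>a1 m - a2 m\<bar> + G \<bar>f2 x - a2 m\<bar>)"
          by (intro three) auto
        finally have "ennreal (G \<bar>f1 x - f2 x\<bar>) \<le> ennreal (cG^2 * (G \<bar>f1 x - a1 m\<bar> + G \<bar>a1 m - a2 m\<bar> + G \<bar>f2 x - a2 m\<bar>))"
          by (rule ennreal_leI)
        also have "\<dots> = ennreal (cG^2) * (ennreal (G \<bar>f1 x - a1 m\<bar>) + ennreal (G \<bar>a1 m - a2 m\<bar>) + ennreal (G \<bar>f2 x - a2 m\<bar>))"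
          using nonneg cG(1) by (simp add: ennreal_mult ennreal_plus add_nonneg_nonneg)
        finally show ?thesis using True by simp
      qed simp
    qed
    also have "\<dots> = ennreal (cG^2) * (X1s m + ennreal (G \<bar>a1 m - a2 m\<bar>) * emeasure lebesgue (cube e m) + X2s m)"
      unfolding X1s_def X2s_def
      by (simp add: nn_integral_cmult nn_integral_add nn_integral_cmult_indicator)
    also have "\<dots> \<le> ennreal (cG^2) * (X1s m + ennreal (eta * mu) + X2s m)"
    proof -
      have "ennreal (G \<bar>a1 m - a2 m\<bar>) * emeasure lebesgue (cube e m) = ennreal (G \<bar>a1 m - a2 m\<bar> * mu)"
        unfolding mu_def using cube_measure[OF e, of m] nonneg mu by (simp add: ennreal_mult mu_def)
      also have "\<dots> \<le> ennreal (eta * mu)"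
        using close[of m] m mu unfolding Ix_def by (intro ennreal_leI mult_right_mono) auto
      finally show ?thesis by (intro mult_left_mono add_mono) auto
    qed
    finally show ?thesis .
  qed
  have sumX1: "(\<Sum>m\<in>Ix. X1s m) \<le> ennreal ka"
  proof -
    have "(\<Sum>m\<in>Ix. X1s m) \<le> (\<Sum>m\<in>Ix. ennreal ka * (\<integral>\<^sup>+x\<in>cube e m. inr f1 x \<partial>lebesgue))"
      unfolding X1s_def Ix_def by (intro sum_mono X1) (simp add: Ix_def)
    also have "\<dots> = ennreal ka * (\<Sum>m\<in>Ix. \<integral>\<^sup>+x\<in>cube e m. inr f1 x \<partial>lebesgue)"
      by (simp add: sum_distrib_left)
    also have "\<dots> \<le> ennreal ka * 1"
    proof (intro mult_left_mono)
      have "(\<Sum>m\<in>Ix. \<integral>\<^sup>+x\<in>cube e m. inr f1 x \<partial>lebesgue) \<le> (\<integral>\<^sup>+x. inr f1 x \<partial>lebesgue)"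
        by (rule sum_sub_le[OF _ Ixf Ixd]) auto
      then show "(\<Sum>m\<in>Ix. \<integral>\<^sup>+x\<in>cube e m. inr f1 x \<partial>lebesgue) \<le> 1" using S1 unfolding Psi_inr by simp
    qed auto
    finally show ?thesis by simp
  qed
  have sumX2: "(\<Sum>m\<in>Ix. X2s m) \<le> ennreal ka"
  proof -
    have "(\<Sum>m\<in>Ix. X2s m) \<le> (\<Sum>m\<in>Ix. ennreal ka * (\<integral>\<^sup>+x\<in>cube e m. inr f2 x \<partial>lebesgue))"
      unfolding X2s_def Ix_def by (intro sum_mono X2) (simp add: Ix_def)
    also have "\<dots> = ennreal ka * (\<Sum>m\<in>Ix. \<integral>\<^sup>+x\<in>cube e m. inr f2 x \<partial>lebesgue)"
      by (simp add: sum_distrib_left)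
    also have "\<dots> \<le> ennreal ka * 1"
    proof (intro mult_left_mono)
      have "(\<Sum>m\<in>Ix. \<integral>\<^sup>+x\<in>cube e m. inr f2 x \<partial>lebesgue) \<le> (\<integral>\<^sup>+x. inr f2 x \<partial>lebesgue)"
        by (rule sum_sub_le[OF _ Ixf Ixd]) auto
      then show "(\<Sum>m\<in>Ix. \<integral>\<^sup>+x\<in>cube e m. inr f2 x \<partial>lebesgue) \<le> 1" using S2 unfolding Psi_inr by simp
    qed auto
    finally show ?thesis by simp
  qed
  have "(\<integral>\<^sup>+x\<in>cball 0 R. ennreal (G \<bar>f1 x - f2 x\<bar>) \<partial>lebesgue)
      \<le> (\<Sum>m\<in>Ix. ennreal (cG^2) * (X1s m + ennreal (eta * mu) + X2s m))"
    using step1 step2 by (meson order_trans sum_mono)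
  also have "\<dots> = ennreal (cG^2) * ((\<Sum>m\<in>Ix. X1s m) + (\<Sum>m\<in>Ix. ennreal (eta * mu)) + (\<Sum>m\<in>Ix. X2s m))"
    unfolding sum_distrib_left[symmetric] sum.distrib by simp
  also have "\<dots> \<le> ennreal (cG^2) * (ennreal ka + ennreal (real (card Ix) * (eta * mu)) + ennreal ka)"
  proof -
    have "(\<Sum>m\<in>Ix. ennreal (eta * mu)) = ennreal (real (card Ix) * (eta * mu))"
      using eta mu by (simp add: ennreal_mult ennreal_of_nat_eq_real_of_nat)
    then show ?thesis using sumX1 sumX2 by (intro mult_left_mono add_mono) auto
  qed
  also have "\<dots> = ennreal (cG^2 * (2 * ka + real (card Ix) * eta * mu))"
    using ka eta mu cG(1) by (simp add: ennreal_mult[symmetric] ennreal_plus[symmetric] algebra_simps del: ennreal_plus)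
  finally show ?thesis unfolding Ix_def mu_def .
qed

lemma stage:
  fixes g :: "nat \<Rightarrow> 'a::euclidean_space \<Rightarrow> real" and e R :: real
  assumes G1: "0 < G 1" and gm[measurable]: "\<And>k. g k \<in> borel_measurable lebesgue"
    and gP: "\<And>k. Phi G (g k) \<le> 1" and gS: "\<And>k. Psi s G \<delta> (g k) \<le> 1"
    and e: "0 < e" "real DIM('a) * e \<le> 1" "real DIM('a) * e < \<delta>"
  shows "\<exists>r :: nat \<Rightarrow> nat. strict_mono r \<and> (\<exists>J. \<forall>j\<ge>J. \<forall>k\<ge>J.
     (\<integral>\<^sup>+x\<in>cball 0 R. ennreal (G \<bar>g (r j) x - g (r k) x\<bar>) \<partial>lebesgue)
        \<le> ennreal (cG^2 * (6 * real DIM('a) powr (s + DIM('a)) + 1) * e powr s))"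
proof -
  define Ix where "Ix = (cidx e R :: ('a \<Rightarrow> int) set)"
  define mu :: real where "mu = e ^ DIM('a)"
  define d where "d = real DIM('a) * e"
  define ka where "ka = 3 * d powr (s + DIM('a)) / mu"
  have mu: "0 < mu" unfolding mu_def using e by simp
  have d: "0 < d" "d \<le> 1" "d < \<delta>" unfolding d_def using e by auto
  have ka_eq: "ka = 3 * real DIM('a) powr (s + DIM('a)) * e powr s"
  proof -
    have "d powr (s + DIM('a)) = real DIM('a) powr (s + DIM('a)) * e powr (s + DIM('a))"
      unfolding d_def using e by (simp add: powr_mult)
    also have "e powr (s + DIM('a)) = e powr s * mu"
      unfolding mu_def using e by (simp add: powr_add powr_realpow)
    finally show ?thesis unfolding ka_def using mu by (simp add: field_simps)
  qed
  have ka0: "0 \<le> ka" unfolding ka_def using mu by simp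
  have Ixf: "finite Ix" unfolding Ix_def by (rule cidx_finite)
  define PR where "PR k m a \<longleftrightarrow> ennreal (G \<bar>a\<bar> * mu) \<le> 3 * (\<integral>\<^sup>+x\<in>cube e m. ennreal (G \<bar>g k x\<bar>) \<partial>lebesgue) \<and>
      (\<integral>\<^sup>+y\<in>cube e m. ennreal (G \<bar>g k y - a\<bar>) \<partial>lebesgue) \<le> ennreal ka * (\<integral>\<^sup>+x\<in>cube e m. inr (g k) x \<partial>lebesgue)"
    for k m a
  have core_app: "\<exists>a. PR k m a" for k m
  proof -
    have P1: "(\<integral>\<^sup>+x\<in>cube e m. ennreal (G \<bar>g k x\<bar>) \<partial>lebesgue) \<le> 1" using Phi_sub gP order_trans by blast
    have S1: "(\<integral>\<^sup>+x\<in>cube e m. inr (g k) x \<partial>lebesgue) \<le> 1" using Psi_sub gS order_trans by blast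
    show ?thesis unfolding PR_def ka_def
    proof (rule core[OF gm cube_sets mu _ _ d])
      show "ennreal mu \<le> emeasure lebesgue (cube e m)" unfolding mu_def cube_measure[OF e(1)] by simp
      show "emeasure lebesgue (cube e m) < \<infinity>" unfolding cube_measure[OF e(1)] by simp
      show "dist x y \<le> d" if "x \<in> cube e m" "y \<in> cube e m" for x y
        unfolding d_def using cube_diam[OF that] .
      show "(\<integral>\<^sup>+x\<in>cube e m. ennreal (G \<bar>g k x\<bar>) \<partial>lebesgue) < \<infinity>" using P1
        by (simp add: le_less_trans)
      show "(\<integral>\<^sup>+x\<in>cube e m. inr (g k) x \<partial>lebesgue) < \<infinity>" using S1
        by (simp add: le_less_trans)
    qed
  qed
  define A where "A k m = (SOME a. PR k m a)" for k m
  have A: "PR k m (A k m)" for k m unfolding A_def by (rule someI_ex[OF core_app])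
  define B where "B = max 1 (3 / (mu * G 1))"
  have Abound: "\<bar>A k m\<bar> \<le> B" for k m
  proof -
    have P1: "(\<integral>\<^sup>+x\<in>cube e m. ennreal (G \<bar>g k x\<bar>) \<partial>lebesgue) \<le> 1" using Phi_sub gP order_trans by blast
    have "ennreal (G \<bar>A k m\<bar> * mu) \<le> 3 * 1" using A[of k m] P1 unfolding PR_def
      by (meson order_trans mult_left_mono zero_le)
    then have le3: "G \<bar>A k m\<bar> * mu \<le> 3" by (simp add: ennreal_le_iff[symmetric] del: ennreal_le_iff)
    show ?thesis
    proof (cases "\<bar>A k m\<bar> \<le> 1")
      case True then show ?thesis unfolding B_def by simp
    next
      case False
      have "\<bar>A k m\<bar> * G 1 * mu \<le> G \<bar>A k m\<bar> * mu" using lin[of "\<bar>A k m\<bar>"] False mu by (intro mult_right_mono) auto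
      then have "\<bar>A k m\<bar> * (mu * G 1) \<le> 3" using le3 by (simp add: mult_ac)
      then have "\<bar>A k m\<bar> \<le> 3 / (mu * G 1)" using mu G1 by (simp add: le_divide_eq)
      then show ?thesis unfolding B_def by simp
    qed
  qed
  obtain r where r: "strict_mono r" "\<forall>m\<in>Ix. convergent (\<lambda>k. A (r k) m)"
    using finite_bolzano[OF Ixf, of A B] Abound by blast
  define eta where "eta = e powr s / (mu * (real (card Ix) + 1))"
  have eta: "0 < eta" unfolding eta_def using e mu by simp
  obtain J where J: "\<forall>j\<ge>J. \<forall>k\<ge>J. \<forall>m\<in>Ix. G \<bar>A (r j) m - A (r k) m\<bar> < eta"
    using cauchy_fin[OF Ixf r(2) eta] by blast
  have "(\<integral>\<^sup>+x\<in>cball 0 R. ennreal (G \<bar>g (r j) x - g (r k) x\<bar>) \<partial>lebesgue)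
        \<le> ennreal (cG^2 * (6 * real DIM('a) powr (s + DIM('a)) + 1) * e powr s)" if jk: "j \<ge> J" "k \<ge> J" for j k
  proof -
    have "(\<integral>\<^sup>+x\<in>cball 0 R. ennreal (G \<bar>g (r j) x - g (r k) x\<bar>) \<partial>lebesgue)
        \<le> ennreal (cG^2 * (2 * ka + real (card Ix) * eta * e ^ DIM('a)))"
      unfolding Ix_def
    proof (rule pair_est[OF gm gm e(1) ka0 less_imp_le[OF eta]])
      show "(\<integral>\<^sup>+y\<in>cube e m. ennreal (G \<bar>g (r j) y - A (r j) m\<bar>) \<partial>lebesgue) \<le> ennreal ka * (\<integral>\<^sup>+x\<in>cube e m. inr (g (r j)) x \<partial>lebesgue)" for m
        using A[of "r j" m] unfolding PR_def by blast
      show "(\<integral>\<^sup>+y\<in>cube e m. ennreal (G \<bar>g (r k) y - A (r k) m\<bar>) \<partial>lebesgue) \<le> ennreal ka * (\<integral>\<^sup>+x\<in>cube e m. inr (g (r k)) x \<partial>lebesgue)" for m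
        using A[of "r k" m] unfolding PR_def by blast
      show "G \<bar>A (r j) m - A (r k) m\<bar> \<le> eta" if "m \<in> cidx e R" for m
        using J jk that unfolding Ix_def by (meson less_imp_le)
    qed (use gS in auto)
    also have "\<dots> \<le> ennreal (cG^2 * (6 * real DIM('a) powr (s + DIM('a)) + 1) * e powr s)"
    proof (intro ennreal_leI)
      have c1: "real (card Ix) + 1 > 0" by simp
      have "real (card Ix) * eta * e ^ DIM('a) = real (card Ix) * eta * mu" by (simp add: mu_def)
      also have "\<dots> = e powr s * (real (card Ix) / (real (card Ix) + 1))"
        unfolding eta_def using mu by (intro aux1) auto
      also have "\<dots> \<le> e powr s * 1" by (intro mult_left_mono) auto
      finally have "2 * ka + real (card Ix) * eta * e ^ DIM('a) \<le> (6 * real DIM('a) powr (s + DIM('a)) + 1) * e powr s"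
        unfolding ka_eq by (simp add: algebra_simps)
      then show "cG^2 * (2 * ka + real (card Ix) * eta * e ^ DIM('a)) \<le> cG^2 * (6 * real DIM('a) powr (s + DIM('a)) + 1) * e powr s"
        using cG(1) by (simp add: mult.assoc mult_left_mono)
    qed
    finally show ?thesis .
  qed
  note main = this
  show ?thesis
    by (rule exI[of _ r], rule conjI[OF r(1)], rule exI[of _ J]) (use main in blast)
qed

end


context fr
begin

lemma ball_mono_int:
  assumes "A \<subseteq> B"
  shows "(\<integral>\<^sup>+x\<in>A. h x \<partial>M) \<le> (\<integral>\<^sup>+x\<in>B. h x \<partial>M)"
  using assms by (intro nn_integral_mono mult_left_mono) (auto simp: indicator_def)

lemma diag:
  fixes f :: "nat \<Rightarrow> 'a::euclidean_space \<Rightarrow> real"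
  assumes G1: "0 < G 1" and fm[measurable]: "\<And>k. f k \<in> borel_measurable lebesgue"
    and fP: "\<And>k. Phi G (f k) \<le> 1" and fS: "\<And>k. Psi s G \<delta> (f k) \<le> 1"
  shows "\<exists>r::nat\<Rightarrow>nat. strict_mono r \<and> (\<forall>n::nat. \<forall>\<epsilon>>0. \<exists>J. \<forall>j\<ge>J. \<forall>k\<ge>J.
            (\<integral>\<^sup>+x\<in>cball 0 (real n). ennreal (G \<bar>f (r j) x - f (r k) x\<bar>) \<partial>lebesgue) \<le> ennreal \<epsilon>)"
proof -
  define NN where "NN = real DIM('a)"
  have NN: "1 \<le> NN" unfolding NN_def by (simp add: DIM_positive Suc_leI)
  define c where "c = min 1 (\<delta>/2)"
  have c: "0 < c" "c \<le> 1" "c < \<delta>" unfolding c_def using d0 by auto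
  define ep where "ep n = c / (NN * real (Suc n))" for n
  define C0 where "C0 = cG^2 * (6 * NN powr (s + DIM('a)) + 1)"
  define P where "P n (t::nat\<Rightarrow>nat) \<longleftrightarrow> (\<exists>J. \<forall>j\<ge>J. \<forall>k\<ge>J.
      (\<integral>\<^sup>+x\<in>cball 0 (real n). ennreal (G \<bar>f (t j) x - f (t k) x\<bar>) \<partial>lebesgue) \<le> ennreal (C0 * ep n powr s))" for n t
  have ep: "0 < ep n" "NN * ep n \<le> 1" "NN * ep n < \<delta>" for n
  proof -
    show "0 < ep n" unfolding ep_def using c NN by simp
    have "NN * ep n = c / real (Suc n)" unfolding ep_def using NN by simp
    also have "\<dots> \<le> c" using c by (simp add: divide_le_eq)
    finally show "NN * ep n \<le> 1" "NN * ep n < \<delta>" using c by auto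
  qed
  interpret subseqs P
  proof
    fix n and t :: "nat \<Rightarrow> nat" assume "strict_mono t"
    have "\<exists>r :: nat \<Rightarrow> nat. strict_mono r \<and> (\<exists>J. \<forall>j\<ge>J. \<forall>k\<ge>J.
     (\<integral>\<^sup>+x\<in>cball 0 (real n). ennreal (G \<bar>f (t (r j)) x - f (t (r k)) x\<bar>) \<partial>lebesgue)
        \<le> ennreal (cG^2 * (6 * real DIM('a) powr (s + DIM('a)) + 1) * ep n powr s))"
      by (rule stage[OF G1 fm fP fS ep(1)]) (use ep in \<open>auto simp: NN_def\<close>)
    then show "\<exists>r'. strict_mono r' \<and> P n (t \<circ> r')" unfolding P_def C0_def NN_def by auto
  qed
  have stable: "P n (t \<circ> r)" if sa: "strict_mono r" and sb: "P n t" for r t n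
  proof -
    obtain J where J: "\<forall>j\<ge>J. \<forall>k\<ge>J. (\<integral>\<^sup>+x\<in>cball 0 (real n). ennreal (G \<bar>f (t j) x - f (t k) x\<bar>) \<partial>lebesgue) \<le> ennreal (C0 * ep n powr s)"
      using sb unfolding P_def by blast
    have rj: "r j \<ge> j" for j using seq_suble[OF sa] .
    show ?thesis unfolding P_def
    proof (intro exI[of _ J] allI impI)
      fix j k assume "J \<le> j" "J \<le> k"
      then have "J \<le> r j" "J \<le> r k" using rj order_trans by blast+
      then show "(\<integral>\<^sup>+x\<in>cball 0 (real n). ennreal (G \<bar>f ((t \<circ> r) j) x - f ((t \<circ> r) k) x\<bar>) \<partial>lebesgue) \<le> ennreal (C0 * ep n powr s)"
        using J by simp
    qed
  qed
  have Pd2: "\<exists>J. \<forall>j\<ge>J. \<forall>k\<ge>J. (\<integral>\<^sup>+x\<in>cball 0 (real n). ennreal (G \<bar>f (diagseq j) x - f (diagseq k) x\<bar>) \<partial>lebesgue) \<le> ennreal (C0 * ep n powr s)" for n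
  proof -
    have "P n (diagseq \<circ> (+) (Suc n))" by (rule diagseq_holds) (rule stable)
    then obtain J where J: "\<forall>j\<ge>J. \<forall>k\<ge>J. (\<integral>\<^sup>+x\<in>cball 0 (real n). ennreal (G \<bar>f (diagseq (Suc n + j)) x - f (diagseq (Suc n + k)) x\<bar>) \<partial>lebesgue) \<le> ennreal (C0 * ep n powr s)"
      unfolding P_def by auto
    show ?thesis
    proof (intro exI[of _ "J + Suc n"] allI impI)
      fix j k assume jk: "J + Suc n \<le> j" "J + Suc n \<le> k"
      have eq: "Suc n + (j - Suc n) = j" "Suc n + (k - Suc n) = k" using jk by auto
      have ge: "j - Suc n \<ge> J" "k - Suc n \<ge> J" using jk by auto
      show "(\<integral>\<^sup>+x\<in>cball 0 (real n). ennreal (G \<bar>f (diagseq j) x - f (diagseq k) x\<bar>) \<partial>lebesgue) \<le> ennreal (C0 * ep n powr s)"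
        using J[rule_format, OF ge] unfolding eq .
    qed
  qed
  have lim: "(\<lambda>n. C0 * ep n powr s) \<longlonglongrightarrow> 0"
  proof -
    have "(\<lambda>n. (c / NN) * inverse (real (Suc n))) \<longlonglongrightarrow> (c / NN) * 0"
      by (intro tendsto_mult tendsto_const LIMSEQ_inverse_real_of_nat)
    moreover have "ep = (\<lambda>n. (c / NN) * inverse (real (Suc n)))" unfolding ep_def by (rule ext) (simp add: field_simps)
    ultimately have "ep \<longlonglongrightarrow> 0" by simp
    then have "(\<lambda>n. ep n powr s) \<longlonglongrightarrow> 0"
      by (rule tendsto_zero_powrI[OF _ tendsto_const]) (use ep(1) s0 in \<open>auto intro!: always_eventually less_imp_le\<close>)
    then show ?thesis by (intro tendsto_mult_right_zero)
  qed
  show ?thesis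
  proof (intro exI[of _ diagseq] conjI subseq_diagseq allI impI)
    fix n :: nat and \<epsilon> :: real assume \<epsilon>: "\<epsilon> > 0"
    obtain M where M: "\<And>m. m \<ge> M \<Longrightarrow> C0 * ep m powr s < \<epsilon>"
      using order_tendstoD(2)[OF lim \<epsilon>] unfolding eventually_sequentially by blast
    define m where "m = max n M"
    obtain J where J: "\<forall>j\<ge>J. \<forall>k\<ge>J. (\<integral>\<^sup>+x\<in>cball 0 (real m). ennreal (G \<bar>f (diagseq j) x - f (diagseq k) x\<bar>) \<partial>lebesgue) \<le> ennreal (C0 * ep m powr s)"
      using Pd2 by blast
    show "\<exists>J. \<forall>j\<ge>J. \<forall>k\<ge>J. (\<integral>\<^sup>+x\<in>cball 0 (real n). ennreal (G \<bar>f (diagseq j) x - f (diagseq k) x\<bar>) \<partial>lebesgue) \<le> ennreal \<epsilon>"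
    proof (intro exI[of _ J] allI impI)
      fix j k assume jk: "j \<ge> J" "k \<ge> J"
      have "(\<integral>\<^sup>+x\<in>cball 0 (real n). ennreal (G \<bar>f (diagseq j) x - f (diagseq k) x\<bar>) \<partial>lebesgue)
          \<le> (\<integral>\<^sup>+x\<in>cball 0 (real m). ennreal (G \<bar>f (diagseq j) x - f (diagseq k) x\<bar>) \<partial>lebesgue)"
        by (rule ball_mono_int) (auto simp: m_def)
      also have "\<dots> \<le> ennreal (C0 * ep m powr s)" using J jk by blast
      also have "\<dots> \<le> ennreal \<epsilon>" using M[of m] by (intro ennreal_leI) (auto simp: m_def)
      finally show "(\<integral>\<^sup>+x\<in>cball 0 (real n). ennreal (G \<bar>f (diagseq j) x - f (diagseq k) x\<bar>) \<partial>lebesgue) \<le> ennreal \<epsilon>" .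
    qed
  qed
qed

end


lemma fatou_ae:
  fixes u :: "nat \<Rightarrow> 'a \<Rightarrow> ennreal"
  assumes u: "\<And>i. u i \<in> borel_measurable M" and lim: "AE x in M. (\<lambda>i. u i x) \<longlonglongrightarrow> v x"
    and bd: "eventually (\<lambda>i. integral\<^sup>N M (u i) \<le> C) sequentially"
  shows "integral\<^sup>N M v \<le> C"
proof -
  have "integral\<^sup>N M v = (\<integral>\<^sup>+x. liminf (\<lambda>i. u i x) \<partial>M)"
    by (rule nn_integral_cong_AE) (use lim in \<open>eventually_elim, simp add: lim_imp_Liminf\<close>)
  also have "\<dots> \<le> liminf (\<lambda>i. integral\<^sup>N M (u i))" by (rule nn_integral_liminf[OF u])
  also have "\<dots> \<le> C" by (rule Liminf_le[OF _ bd]) simp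
  finally show ?thesis .
qed

context fr
begin

lemma ae_conv:
  fixes f :: "nat \<Rightarrow> 'a::euclidean_space \<Rightarrow> real"
  assumes Gpos: "\<And>t. t > 0 \<Longrightarrow> G t > 0" and fm[measurable]: "\<And>k. f k \<in> borel_measurable lebesgue"
    and cauchy: "\<forall>n::nat. \<forall>\<epsilon>>0. \<exists>J. \<forall>j\<ge>J. \<forall>k\<ge>J.
            (\<integral>\<^sup>+x\<in>cball 0 (real n). ennreal (G \<bar>f j x - f k x\<bar>) \<partial>lebesgue) \<le> ennreal \<epsilon>"
  shows "\<exists>t::nat\<Rightarrow>nat. strict_mono t \<and> (AE x in lebesgue. convergent (\<lambda>i. f (t i) x))"
proof -
  define ep where "ep i = G ((1/2)^i) * (1/2)^i" for i :: nat
  have Gh: "0 < G ((1/2::real)^i)" for i :: nat by (rule Gpos) simp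
  have ep: "0 < ep i" for i unfolding ep_def using Gh[of i] by simp
  define PJ where "PJ i J \<longleftrightarrow> (\<forall>j\<ge>J. \<forall>k\<ge>J.
            (\<integral>\<^sup>+x\<in>cball 0 (real i). ennreal (G \<bar>f j x - f k x\<bar>) \<partial>lebesgue) \<le> ennreal (ep i))" for i J
  define J where "J i = (SOME J. PJ i J)" for i
  have J: "PJ i (J i)" for i unfolding J_def by (rule someI_ex) (use cauchy ep in \<open>auto simp: PJ_def\<close>)
  define t where "t i = (\<Sum>l\<le>i. J l) + i" for i
  have tJ: "J i \<le> t i" for i unfolding t_def by (simp add: member_le_sum trans_le_add1)
  have tS: "t (Suc i) = t i + J (Suc i) + 1" for i unfolding t_def by simp
  have t: "strict_mono t" unfolding strict_mono_Suc_iff using tS by simp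
  define h where "h i = f (t i)" for i
  have hm[measurable]: "h i \<in> borel_measurable lebesgue" for i unfolding h_def by simp
  have D: "(\<integral>\<^sup>+x\<in>cball 0 (real i). ennreal (G \<bar>h (Suc i) x - h i x\<bar>) \<partial>lebesgue) \<le> ennreal (ep i)" for i
  proof -
    have "J i \<le> t (Suc i)" using tJ[of i] tS[of i] by simp
    then show ?thesis using J[of i] tJ[of i] unfolding PJ_def h_def by blast
  qed
  have cb[measurable]: "cball (0::'a) r \<in> sets lebesgue" for r
    by (rule sets_completionI_sets) (simp add: borel_closed)
  define E where "E i = {x\<in>space lebesgue. (1/2)^i < \<bar>h (Suc i) x - h i x\<bar>} \<inter> cball 0 (real i)" for i
  have E[measurable]: "E i \<in> sets lebesgue" for i unfolding E_def by measurable
  have Em: "emeasure lebesgue (E i) \<le> ennreal ((1/2)^i)" for i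
  proof -
    define a where "a = G ((1/2::real)^i)"
    have a: "0 < a" unfolding a_def by (rule Gh)
    have sub: "E i \<subseteq> {x\<in>cball 0 (real i). 1 \<le> ennreal (1 / a) * ennreal (G \<bar>h (Suc i) x - h i x\<bar>)}"
    proof
      fix x assume x: "x \<in> E i"
      then have lt: "(1/2)^i < \<bar>h (Suc i) x - h i x\<bar>" and xb: "x \<in> cball 0 (real i)" unfolding E_def by auto
      have "a \<le> G \<bar>h (Suc i) x - h i x\<bar>" unfolding a_def using lt by (intro mono) auto
      then have "1 \<le> (1 / a) * G \<bar>h (Suc i) x - h i x\<bar>" using a by (simp add: field_simps)
      then have "ennreal 1 \<le> ennreal ((1 / a) * G \<bar>h (Suc i) x - h i x\<bar>)" by (rule ennreal_leI)
      also have "\<dots> = ennreal (1 / a) * ennreal (G \<bar>h (Suc i) x - h i x\<bar>)"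
        using a nonneg[of "\<bar>h (Suc i) x - h i x\<bar>"] by (intro ennreal_mult) auto
      finally show "x \<in> {x\<in>cball 0 (real i). 1 \<le> ennreal (1 / a) * ennreal (G \<bar>h (Suc i) x - h i x\<bar>)}"
        using xb by simp
    qed
    have "emeasure lebesgue (E i) \<le> emeasure lebesgue {x\<in>cball 0 (real i). 1 \<le> ennreal (1 / a) * ennreal (G \<bar>h (Suc i) x - h i x\<bar>)}"
    proof (rule emeasure_mono[OF sub])
      have "{x\<in>cball 0 (real i). 1 \<le> ennreal (1 / a) * ennreal (G \<bar>h (Suc i) x - h i x\<bar>)}
          = {x\<in>space lebesgue. 1 \<le> ennreal (1 / a) * ennreal (G \<bar>h (Suc i) x - h i x\<bar>)} \<inter> cball 0 (real i)" by auto
      also have "\<dots> \<in> sets lebesgue" by measurable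
      finally show "{x\<in>cball 0 (real i). 1 \<le> ennreal (1 / a) * ennreal (G \<bar>h (Suc i) x - h i x\<bar>)} \<in> sets lebesgue" .
    qed
    also have "\<dots> \<le> ennreal (1 / a) * (\<integral>\<^sup>+x\<in>cball 0 (real i). ennreal (G \<bar>h (Suc i) x - h i x\<bar>) \<partial>lebesgue)"
      by (rule nn_integral_Markov_inequality) auto
    also have "\<dots> \<le> ennreal (1 / a) * ennreal (ep i)" by (intro mult_left_mono D) auto
    also have "\<dots> = ennreal ((1/2)^i)" unfolding ep_def a_def[symmetric]
      using a by (simp add: ennreal_mult[symmetric])
    finally show ?thesis .
  qed
  have Efin: "emeasure lebesgue (E i) < \<infinity>" for i using Em[of i] by (simp add: le_less_trans)
  have Emr: "measure lebesgue (E i) \<le> (1/2)^i" for i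
  proof -
    have "emeasure lebesgue (E i) = ennreal (measure lebesgue (E i))"
      by (rule emeasure_eq_ennreal_measure) (use Efin[of i] in auto)
    then have "ennreal (measure lebesgue (E i)) \<le> ennreal ((1/2)^i)" using Em[of i] by simp
    then show ?thesis by (subst (asm) ennreal_le_iff) auto
  qed
  have summ: "summable (\<lambda>i. measure lebesgue (E i))"
    by (rule summable_comparison_test[OF _ summable_geometric[of "1/2::real"]]) (use Emr in auto)
  have ae: "AE x in lebesgue. eventually (\<lambda>i. x \<in> space lebesgue - E i) sequentially"
    by (rule borel_cantelli_AE1[OF E Efin summ])
  have "AE x in lebesgue. convergent (\<lambda>i. h i x)"
    using ae
  proof eventually_elim
    case (elim x)
    define n0 where "n0 = nat \<lceil>norm x\<rceil>"
    have "eventually (\<lambda>i. i \<ge> n0) sequentially" by (rule eventually_ge_at_top)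
    with elim have ev: "eventually (\<lambda>i. norm (h (Suc i) x - h i x) \<le> (1/2)^i) sequentially"
    proof eventually_elim
      case (elim i)
      have "norm x \<le> real i" using elim(2) unfolding n0_def by linarith
      then have "x \<in> cball 0 (real i)" by simp
      then show ?case using elim(1) unfolding E_def by auto
    qed
    have "summable (\<lambda>i. h (Suc i) x - h i x)"
      by (rule summable_comparison_test_ev[OF ev summable_geometric]) simp
    then have "(\<lambda>m. \<Sum>i<m. h (Suc i) x - h i x) \<longlonglongrightarrow> (\<Sum>i. h (Suc i) x - h i x)"
      by (rule summable_LIMSEQ)
    then have "(\<lambda>m. h m x - h 0 x) \<longlonglongrightarrow> (\<Sum>i. h (Suc i) x - h i x)"
      using sum_lessThan_telescope[of "\<lambda>i. h i x"] by simp
    then have "(\<lambda>m. (h m x - h 0 x) + h 0 x) \<longlonglongrightarrow> (\<Sum>i. h (Suc i) x - h i x) + h 0 x"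
      by (intro tendsto_add tendsto_const)
    then show ?case unfolding convergent_def by auto
  qed
  then show ?thesis using t unfolding h_def by blast
qed

end


lemma fatou_le:
  fixes u :: "nat \<Rightarrow> 'a \<Rightarrow> ennreal"
  assumes u: "\<And>i. u i \<in> borel_measurable M" and le: "AE x in M. v x \<le> liminf (\<lambda>i. u i x)"
  shows "integral\<^sup>N M v \<le> liminf (\<lambda>i. integral\<^sup>N M (u i))"
proof -
  have "integral\<^sup>N M v \<le> (\<integral>\<^sup>+x. liminf (\<lambda>i. u i x) \<partial>M)"
    by (rule nn_integral_mono_AE[OF le])
  also have "\<dots> \<le> liminf (\<lambda>i. integral\<^sup>N M (u i))" by (rule nn_integral_liminf[OF u])
  finally show ?thesis .
qed

lemma lim_le_liminf: "(\<lambda>i. u i) \<longlonglongrightarrow> (l::ennreal) \<Longrightarrow> l \<le> liminf u"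
  by (simp add: lim_imp_Liminf)

context orl
begin

lemma G_tendsto: "(F \<longlongrightarrow> a) net \<Longrightarrow> ((\<lambda>i. G \<bar>F i\<bar>) \<longlongrightarrow> G \<bar>a\<bar>) net"
proof -
  assume F: "(F \<longlongrightarrow> a) net"
  have "isCont (\<lambda>t. G \<bar>t\<bar>) a" using Gabs_cont continuous_on_eq_continuous_at by blast
  then show ?thesis using isCont_tendsto_compose[OF _ F] by blast
qed

end

context fr
begin

lemma limit_props:
  fixes h :: "nat \<Rightarrow> 'a::euclidean_space \<Rightarrow> real"
  assumes hm[measurable]: "\<And>k. h k \<in> borel_measurable lebesgue"
    and hP: "\<And>k. Phi G (h k) \<le> 1" and hS: "\<And>k. Psi s G \<delta> (h k) \<le> 1"
    and conv: "AE x in lebesgue. convergent (\<lambda>i. h i x)"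
    and cauchy: "\<forall>n::nat. \<forall>\<epsilon>>0. \<exists>J. \<forall>j\<ge>J. \<forall>k\<ge>J.
            (\<integral>\<^sup>+x\<in>cball 0 (real n). ennreal (G \<bar>h j x - h k x\<bar>) \<partial>lebesgue) \<le> ennreal \<epsilon>"
  shows "(\<lambda>x. lim (\<lambda>i. h i x)) \<in> borel_measurable lebesgue"
    "Phi G (\<lambda>x. lim (\<lambda>i. h i x)) \<le> 1" "Psi s G \<delta> (\<lambda>x. lim (\<lambda>i. h i x)) \<le> 1"
    "\<forall>n::nat. \<forall>\<epsilon>>0. \<exists>K. \<forall>k\<ge>K.
       (\<integral>\<^sup>+x\<in>cball 0 (real n). ennreal (G \<bar>h k x - lim (\<lambda>i. h i x)\<bar>) \<partial>lebesgue) \<le> ennreal \<epsilon>"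
proof -
  define z where "z x = lim (\<lambda>i. h i x)" for x
  have zm[measurable]: "z \<in> borel_measurable lebesgue" unfolding z_def by measurable
  have lim: "AE x in lebesgue. (\<lambda>i. h i x) \<longlonglongrightarrow> z x"
    using conv by eventually_elim (simp add: z_def convergent_LIMSEQ_iff)
  show "(\<lambda>x. lim (\<lambda>i. h i x)) \<in> borel_measurable lebesgue" using zm unfolding z_def .
  have "Phi G z \<le> 1"
  proof -
    have "Phi G z \<le> liminf (\<lambda>i. Phi G (h i))"
      unfolding Phi_on_def
    proof (rule fatou_le)
      show "AE x in lebesgue. ennreal (G \<bar>z x\<bar>) * indicator UNIV x \<le> liminf (\<lambda>i. ennreal (G \<bar>h i x\<bar>) * indicator UNIV x)"
        using lim
      proof eventually_elim
        case (elim x)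
        have "(\<lambda>i. ennreal (G \<bar>h i x\<bar>)) \<longlonglongrightarrow> ennreal (G \<bar>z x\<bar>)"
          by (intro tendsto_ennrealI G_tendsto elim)
        then show ?case by (simp add: lim_le_liminf)
      qed
    qed measurable
    also have "\<dots> \<le> 1" by (rule Liminf_le) (use hP in auto)
    finally show ?thesis .
  qed
  then show "Phi G (\<lambda>x. lim (\<lambda>i. h i x)) \<le> 1" unfolding z_def .
  have "Psi s G \<delta> z \<le> 1"
  proof -
    have "Psi s G \<delta> z \<le> liminf (\<lambda>i. Psi s G \<delta> (h i))"
      unfolding Psi_inr
    proof (rule fatou_le)
      show "AE x in lebesgue. inr z x \<le> liminf (\<lambda>i. inr (h i) x)"
        using lim
      proof eventually_elim
        case (elim x)
        show ?case unfolding inr_def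
        proof (rule fatou_le)
          show "AE y in lebesgue. psiF s G \<delta> z x y \<le> liminf (\<lambda>i. psiF s G \<delta> (h i) x y)"
            using lim
          proof eventually_elim
            case (elim y)
            define c where "c = dist x y powr s"
            have c: "0 \<le> c" unfolding c_def by simp
            have "(\<lambda>i. (h i x - h i y) / c) \<longlonglongrightarrow> (z x - z y) / c"
              using tendsto_mult[OF tendsto_diff[OF \<open>(\<lambda>i. h i x) \<longlonglongrightarrow> z x\<close> elim] tendsto_const[of "1/c"]] by simp
            then have "(\<lambda>i. G \<bar>(h i x - h i y) / c\<bar>) \<longlonglongrightarrow> G \<bar>(z x - z y) / c\<bar>"
              by (rule G_tendsto)
            then have "(\<lambda>i. G \<bar>(h i x - h i y) / c\<bar> * (1 / dist x y ^ DIM('a))) \<longlonglongrightarrow> G \<bar>(z x - z y) / c\<bar> * (1 / dist x y ^ DIM('a))"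
              by (rule tendsto_mult[OF _ tendsto_const])
            then have "(\<lambda>i. ennreal (G \<bar>(h i x - h i y) / c\<bar> * (1 / dist x y ^ DIM('a))))
               \<longlonglongrightarrow> ennreal (G \<bar>(z x - z y) / c\<bar> * (1 / dist x y ^ DIM('a)))"
              by (rule tendsto_ennrealI)
            then have "(\<lambda>i. indicator (ball x \<delta>) y * ennreal (G \<bar>(h i x - h i y) / c\<bar> * (1 / dist x y ^ DIM('a))))
               \<longlonglongrightarrow> indicator (ball x \<delta>) y * ennreal (G \<bar>(z x - z y) / c\<bar> * (1 / dist x y ^ DIM('a)))"
              by (rule ennreal_tendsto_cmult[rotated]) (simp add: indicator_def)
            then have "(\<lambda>i. psiF s G \<delta> (h i) x y) \<longlonglongrightarrow> psiF s G \<delta> z x y"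
              unfolding psiF_def c_def using c by (simp add: abs_divide c_def mult.commute)
            then show ?case by (rule lim_le_liminf)
          qed
        qed measurable
      qed
    qed measurable
    also have "\<dots> \<le> 1" by (rule Liminf_le) (use hS in auto)
    finally show ?thesis .
  qed
  then show "Psi s G \<delta> (\<lambda>x. lim (\<lambda>i. h i x)) \<le> 1" unfolding z_def .
  have cb[measurable]: "cball (0::'a) r \<in> sets lebesgue" for r
    by (rule sets_completionI_sets) (simp add: borel_closed)
  have "\<exists>K. \<forall>k\<ge>K. (\<integral>\<^sup>+x\<in>cball 0 (real n). ennreal (G \<bar>h k x - z x\<bar>) \<partial>lebesgue) \<le> ennreal \<epsilon>"
    if e: "\<epsilon> > 0" for n :: nat and \<epsilon> :: real
  proof -
    obtain J where J: "\<forall>j\<ge>J. \<forall>k\<ge>J. (\<integral>\<^sup>+x\<in>cball 0 (real n). ennreal (G \<bar>h j x - h k x\<bar>) \<partial>lebesgue) \<le> ennreal \<epsilon>"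
      using cauchy e by blast
    have "(\<integral>\<^sup>+x\<in>cball 0 (real n). ennreal (G \<bar>h k x - z x\<bar>) \<partial>lebesgue) \<le> ennreal \<epsilon>" if k: "k \<ge> J" for k
    proof -
      have "(\<integral>\<^sup>+x\<in>cball 0 (real n). ennreal (G \<bar>h k x - z x\<bar>) \<partial>lebesgue)
          \<le> liminf (\<lambda>i. \<integral>\<^sup>+x\<in>cball 0 (real n). ennreal (G \<bar>h k x - h i x\<bar>) \<partial>lebesgue)"
      proof (rule fatou_le)
        show "AE x in lebesgue. ennreal (G \<bar>h k x - z x\<bar>) * indicator (cball 0 (real n)) x
           \<le> liminf (\<lambda>i. ennreal (G \<bar>h k x - h i x\<bar>) * indicator (cball 0 (real n)) x)"
          using lim
        proof eventually_elim
          case (elim x)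
          have "(\<lambda>i. ennreal (G \<bar>h k x - h i x\<bar>) * indicator (cball 0 (real n)) x)
             \<longlonglongrightarrow> ennreal (G \<bar>h k x - z x\<bar>) * indicator (cball 0 (real n)) x"
            by (intro tendsto_intros tendsto_ennrealI G_tendsto elim) (auto simp: indicator_def)
          then show ?case by (rule lim_le_liminf)
        qed
      qed measurable
      also have "\<dots> \<le> ennreal \<epsilon>"
        by (rule Liminf_le) (use J k in \<open>auto simp: eventually_sequentially\<close>)
      finally show ?thesis .
    qed
    then show ?thesis by blast
  qed
  then show "\<forall>n::nat. \<forall>\<epsilon>>0. \<exists>K. \<forall>k\<ge>K.
       (\<integral>\<^sup>+x\<in>cball 0 (real n). ennreal (G \<bar>h k x - lim (\<lambda>i. h i x)\<bar>) \<partial>lebesgue) \<le> ennreal \<epsilon>"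
    unfolding z_def by blast
qed

end


context fr
begin

lemma Phi_scale:
  fixes f :: "'a::euclidean_space \<Rightarrow> real"
  assumes f[measurable]: "f \<in> borel_measurable lebesgue" and A[measurable]: "A \<in> sets lebesgue" and l: "1 \<le> l"
  shows "Phi_on A G (\<lambda>x. f x / l) \<le> ennreal (1 / l) * Phi_on A G f"
proof -
  have "Phi_on A G (\<lambda>x. f x / l) \<le> (\<integral>\<^sup>+x. ennreal (1 / l) * (ennreal (G \<bar>f x\<bar>) * indicator A x) \<partial>lebesgue)"
    unfolding Phi_on_def
  proof (intro nn_integral_mono)
    fix x
    have "G \<bar>f x / l\<bar> = G ((1 / l) * \<bar>f x\<bar>)" using l by (simp add: abs_divide)
    also have "\<dots> \<le> (1 / l) * G \<bar>f x\<bar>" using l by (intro scale) auto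
    finally have "ennreal (G \<bar>f x / l\<bar>) \<le> ennreal (1 / l) * ennreal (G \<bar>f x\<bar>)"
      using l nonneg[of "\<bar>f x\<bar>"] by (simp add: ennreal_mult[symmetric])
    then show "ennreal (G \<bar>f x / l\<bar>) * indicator A x \<le> ennreal (1 / l) * (ennreal (G \<bar>f x\<bar>) * indicator A x)"
      by (simp add: indicator_def)
  qed
  also have "\<dots> = ennreal (1 / l) * Phi_on A G f" unfolding Phi_on_def
    by (rule nn_integral_cmult) measurable
  finally show ?thesis .
qed

lemma Phi_big:
  fixes f :: "'a::euclidean_space \<Rightarrow> real"
  assumes f[measurable]: "f \<in> borel_measurable lebesgue" and A[measurable]: "A \<in> sets lebesgue"
    and C: "\<And>t. 0 \<le> t \<Longrightarrow> G (c * t) \<le> C * G t" and c: "0 \<le> c" and C0: "0 \<le> C"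
  shows "Phi_on A G (\<lambda>x. c * f x) \<le> ennreal C * Phi_on A G f"
proof -
  have "Phi_on A G (\<lambda>x. c * f x) \<le> (\<integral>\<^sup>+x. ennreal C * (ennreal (G \<bar>f x\<bar>) * indicator A x) \<partial>lebesgue)"
    unfolding Phi_on_def
  proof (intro nn_integral_mono)
    fix x
    have "G \<bar>c * f x\<bar> = G (c * \<bar>f x\<bar>)" using c by (simp add: abs_mult)
    also have "\<dots> \<le> C * G \<bar>f x\<bar>" using C by simp
    finally have "ennreal (G \<bar>c * f x\<bar>) \<le> ennreal C * ennreal (G \<bar>f x\<bar>)"
      using C0 nonneg[of "\<bar>f x\<bar>"] by (simp add: ennreal_mult[symmetric])
    then show "ennreal (G \<bar>c * f x\<bar>) * indicator A x \<le> ennreal C * (ennreal (G \<bar>f x\<bar>) * indicator A x)"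
      by (simp add: indicator_def)
  qed
  also have "\<dots> = ennreal C * Phi_on A G f" unfolding Phi_on_def
    by (rule nn_integral_cmult) measurable
  finally show ?thesis .
qed

lemma Psi_gen:
  fixes f g :: "'a::euclidean_space \<Rightarrow> real"
  assumes f[measurable]: "f \<in> borel_measurable lebesgue"
    and C: "\<And>x y. G (\<bar>g x - g y\<bar> / dist x y powr s) \<le> C * G (\<bar>f x - f y\<bar> / dist x y powr s)"
    and C0: "0 \<le> C"
  shows "Psi s G \<delta> g \<le> ennreal C * Psi s G \<delta> f"
proof -
  have pt: "psiF s G \<delta> g x y \<le> ennreal C * psiF s G \<delta> f x y" for x y
  proof -
    have "G (\<bar>g x - g y\<bar> / dist x y powr s) / dist x y ^ DIM('a) \<le> C * G (\<bar>f x - f y\<bar> / dist x y powr s) / dist x y ^ DIM('a)"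
      using C by (simp add: divide_right_mono)
    then have "ennreal (G (\<bar>g x - g y\<bar> / dist x y powr s) / dist x y ^ DIM('a)) \<le> ennreal C * ennreal (G (\<bar>f x - f y\<bar> / dist x y powr s) / dist x y ^ DIM('a))"
      using C0 by (simp add: ennreal_mult[symmetric] nonneg)
    then show ?thesis unfolding psiF_def by (simp add: indicator_def)
  qed
  have "Psi s G \<delta> g \<le> (\<integral>\<^sup>+x. ennreal C * inr f x \<partial>lebesgue)"
    unfolding Psi_inr
  proof (intro nn_integral_mono)
    fix x
    have "inr g x \<le> (\<integral>\<^sup>+y. ennreal C * psiF s G \<delta> f x y \<partial>lebesgue)" unfolding inr_def
      by (intro nn_integral_mono pt)
    also have "\<dots> = ennreal C * inr f x" unfolding inr_def by (rule nn_integral_cmult) measurable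
    finally show "inr g x \<le> ennreal C * inr f x" .
  qed
  also have "\<dots> = ennreal C * Psi s G \<delta> f" unfolding Psi_inr by (rule nn_integral_cmult) measurable
  finally show ?thesis .
qed

lemma Psi_scale:
  fixes f :: "'a::euclidean_space \<Rightarrow> real"
  assumes f[measurable]: "f \<in> borel_measurable lebesgue" and l: "1 \<le> l"
  shows "Psi s G \<delta> (\<lambda>x. f x / l) \<le> ennreal (1 / l) * Psi s G \<delta> f"
proof (rule Psi_gen[OF f])
  fix x y :: 'a
  have "G (\<bar>f x / l - f y / l\<bar> / dist x y powr s) = G ((1 / l) * (\<bar>f x - f y\<bar> / dist x y powr s))"
    using l by (simp add: abs_divide diff_divide_distrib[symmetric])
  also have "\<dots> \<le> (1 / l) * G (\<bar>f x - f y\<bar> / dist x y powr s)" using l by (intro scale) auto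
  finally show "G (\<bar>f x / l - f y / l\<bar> / dist x y powr s) \<le> (1 / l) * G (\<bar>f x - f y\<bar> / dist x y powr s)" .
qed (use l in auto)

lemma Psi_big:
  fixes f :: "'a::euclidean_space \<Rightarrow> real"
  assumes f[measurable]: "f \<in> borel_measurable lebesgue"
    and C: "\<And>t. 0 \<le> t \<Longrightarrow> G (c * t) \<le> C * G t" and c: "0 \<le> c" and C0: "0 \<le> C"
  shows "Psi s G \<delta> (\<lambda>x. c * f x) \<le> ennreal C * Psi s G \<delta> f"
proof (rule Psi_gen[OF f _ C0])
  fix x y :: 'a
  have "G (\<bar>c * f x - c * f y\<bar> / dist x y powr s) = G (c * (\<bar>f x - f y\<bar> / dist x y powr s))"
    using c by (simp add: abs_mult right_diff_distrib[symmetric])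
  also have "\<dots> \<le> C * G (\<bar>f x - f y\<bar> / dist x y powr s)" by (rule C) simp
  finally show "G (\<bar>c * f x - c * f y\<bar> / dist x y powr s) \<le> C * G (\<bar>f x - f y\<bar> / dist x y powr s)" .
qed

lemma small_ennreal:
  assumes P: "P < \<infinity>"
  shows "\<exists>l\<ge>1. ennreal (1 / l) * P \<le> 1"
proof -
  obtain p where p: "P = ennreal p" "0 \<le> p" using P by (cases P) auto
  define l where "l = max 1 p"
  have l: "1 \<le> l" "p \<le> l" unfolding l_def by auto
  have "ennreal (1 / l) * P = ennreal (p / l)" unfolding p using l p by (simp add: ennreal_mult[symmetric])
  also have "\<dots> \<le> ennreal 1" using l p by (intro ennreal_leI) (simp add: divide_le_eq)
  finally show ?thesis using l by auto
qed

lemma lux_set_ne: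
  fixes f :: "'a::euclidean_space \<Rightarrow> real"
  assumes "f \<in> W_sGd s G \<delta>"
  shows "\<exists>l>0. Phi G (\<lambda>x. f x / l) \<le> 1" "\<exists>l>0. Psi s G \<delta> (\<lambda>x. f x / l) \<le> 1"
proof -
  have f[measurable]: "f \<in> borel_measurable lebesgue" and P: "Phi G f < \<infinity>" and S: "Psi s G \<delta> f < \<infinity>"
    using assms unfolding W_sGd_def LG_def by auto
  obtain l where l: "1 \<le> l" "ennreal (1 / l) * Phi G f \<le> 1" using small_ennreal[OF P] by blast
  have U: "UNIV \<in> sets (lebesgue :: 'a measure)" by simp
  have "Phi G (\<lambda>x. f x / l) \<le> 1" using Phi_scale[OF f U l(1)] l(2) by (rule order_trans)
  then show "\<exists>l>0. Phi G (\<lambda>x. f x / l) \<le> 1" using l by (intro exI[of _ l]) auto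
  obtain l' where l': "1 \<le> l'" "ennreal (1 / l') * Psi s G \<delta> f \<le> 1" using small_ennreal[OF S] by blast
  have "Psi s G \<delta> (\<lambda>x. f x / l') \<le> 1" using Psi_scale[OF f l'(1)] l'(2) by (rule order_trans)
  then show "\<exists>l>0. Psi s G \<delta> (\<lambda>x. f x / l) \<le> 1" using l' by (intro exI[of _ l']) auto
qed

end


lemma degenerate_case:
  fixes G :: "real \<Rightarrow> real" and u :: "nat \<Rightarrow> 'a::euclidean_space \<Rightarrow> real"
  assumes G0: "\<And>t. t \<ge> 0 \<Longrightarrow> G t = 0"
  shows "\<exists>v \<in> W_sGd s G \<delta>. \<exists>r :: nat \<Rightarrow> nat. strict_mono r \<and>
           (\<forall>K. compact K \<longrightarrow>
              (\<lambda>k. lux_norm_on K G (\<lambda>x. u (r k) x - v x)) \<longlonglongrightarrow> 0)"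
proof -
  have Gz: "G \<bar>t\<bar> = 0" for t using G0 by simp
  have "(\<lambda>x. 0) \<in> W_sGd s G \<delta>"
    unfolding W_sGd_def LG_def Psi_def Phi_on_def using G0 by simp
  moreover have "lux_norm_on K G (\<lambda>x. u k x - 0) = 0" for K k
  proof -
    have "{l. l > 0 \<and> Phi_on K G (\<lambda>x. (u k x - 0) / l) \<le> 1} = {0<..}"
      unfolding Phi_on_def Gz by auto
    then show ?thesis unfolding lux_norm_on_def by simp
  qed
  ultimately show ?thesis
    by (intro bexI[of _ "\<lambda>x. 0"] exI[of _ id]) (auto simp: strict_mono_def)
qed

context fr
begin

lemma Inf_nonneg: "X \<noteq> {} \<Longrightarrow> \<forall>l\<in>X. 0 < l \<Longrightarrow> 0 \<le> Inf (X :: real set)"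
  by (rule cInf_greatest) auto

lemma main_nondeg:
  fixes u :: "nat \<Rightarrow> 'a::euclidean_space \<Rightarrow> real"
  assumes Gpos: "\<And>t. t > 0 \<Longrightarrow> G t > 0"
    and uW: "\<And>k. u k \<in> W_sGd s G \<delta>"
    and M: "\<And>k. norm_sGd s G \<delta> (u k) \<le> M"
  shows "\<exists>v \<in> W_sGd s G \<delta>. \<exists>r :: nat \<Rightarrow> nat. strict_mono r \<and>
           (\<forall>K. compact K \<longrightarrow>
              (\<lambda>k. lux_norm_on K G (\<lambda>x. u (r k) x - v x)) \<longlonglongrightarrow> 0)"
proof -
  have um[measurable]: "u k \<in> borel_measurable lebesgue" for k using uW[of k] unfolding W_sGd_def LG_def by auto
  define SP where "SP k = {l. l > 0 \<and> Phi G (\<lambda>x. u k x / l) \<le> 1}" for k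
  define SS where "SS k = {l. l > 0 \<and> Psi s G \<delta> (\<lambda>x. u k x / l) \<le> 1}" for k
  have SPne: "SP k \<noteq> {}" for k using lux_set_ne(1)[OF uW[of k]] unfolding SP_def by auto
  have SSne: "SS k \<noteq> {}" for k using lux_set_ne(2)[OF uW[of k]] unfolding SS_def by auto
  have lux: "lux_norm G (u k) = Inf (SP k)" for k unfolding lux_norm_on_def SP_def by simp
  have sem: "seminorm_sGd s G \<delta> (u k) = Inf (SS k)" for k unfolding seminorm_sGd_def SS_def by simp
  have luxn: "0 \<le> Inf (SP k)" for k by (rule Inf_nonneg[OF SPne]) (auto simp: SP_def)
  have semn: "0 \<le> Inf (SS k)" for k by (rule Inf_nonneg[OF SSne]) (auto simp: SS_def)
  have luxM: "Inf (SP k) \<le> M" "Inf (SS k) \<le> M" for k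
    using M[of k] luxn[of k] semn[of k] unfolding norm_sGd_def lux sem by auto
  define L where "L = M + 1"
  have L: "0 < L" unfolding L_def using luxM(1)[of 0] luxn[of 0] by auto
  define f where "f k x = u k x / L" for k x
  have fm[measurable]: "f k \<in> borel_measurable lebesgue" for k unfolding f_def by measurable
  have fP: "Phi G (f k) \<le> 1" for k
  proof -
    obtain l where l: "l \<in> SP k" "l < L" using cInf_lessD[OF SPne[of k], of L] luxM(1)[of k] unfolding L_def by auto
    have "Phi G (f k) \<le> Phi G (\<lambda>x. u k x / l)"
      unfolding Phi_on_def f_def
    proof (intro nn_integral_mono mult_right_mono ennreal_leI mono)
      fix x
      show "\<bar>u k x / L\<bar> \<le> \<bar>u k x / l\<bar>" using l L unfolding SP_def
        by (simp add: abs_divide divide_left_mono)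
    qed auto
    also have "\<dots> \<le> 1" using l unfolding SP_def by auto
    finally show ?thesis .
  qed
  have fS: "Psi s G \<delta> (f k) \<le> 1" for k
  proof -
    obtain l where l: "l \<in> SS k" "l < L" using cInf_lessD[OF SSne[of k], of L] luxM(2)[of k] unfolding L_def by auto
    have l0: "0 < l" using l unfolding SS_def by auto
    have pt: "ennreal (G (\<bar>f k x - f k y\<bar> / dist x y powr s) / dist x y ^ DIM('a)) * indicator (ball x \<delta>) y
        \<le> ennreal (G (\<bar>u k x / l - u k y / l\<bar> / dist x y powr s) / dist x y ^ DIM('a)) * indicator (ball x \<delta>) y" for x y
    proof -
      have e1: "\<bar>f k x - f k y\<bar> = \<bar>u k x - u k y\<bar> / L" unfolding f_def using L by (simp add: diff_divide_distrib[symmetric] abs_divide)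
      have e2: "\<bar>u k x / l - u k y / l\<bar> = \<bar>u k x - u k y\<bar> / l" using l0 by (simp add: diff_divide_distrib[symmetric] abs_divide)
      have "\<bar>u k x - u k y\<bar> / L \<le> \<bar>u k x - u k y\<bar> / l" using l l0 by (intro divide_left_mono) auto
      then have "\<bar>f k x - f k y\<bar> / dist x y powr s \<le> \<bar>u k x / l - u k y / l\<bar> / dist x y powr s"
        unfolding e1 e2 by (intro divide_right_mono) auto
      then have "G (\<bar>f k x - f k y\<bar> / dist x y powr s) \<le> G (\<bar>u k x / l - u k y / l\<bar> / dist x y powr s)"
        by (intro mono) auto
      then have "G (\<bar>f k x - f k y\<bar> / dist x y powr s) / dist x y ^ DIM('a) \<le> G (\<bar>u k x / l - u k y / l\<bar> / dist x y powr s) / dist x y ^ DIM('a)"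
        by (intro divide_right_mono) auto
      then show ?thesis by (intro mult_right_mono ennreal_leI) auto
    qed
    have "Psi s G \<delta> (f k) \<le> Psi s G \<delta> (\<lambda>x. u k x / l)"
      unfolding Psi_def by (intro nn_integral_mono pt)
    also have "\<dots> \<le> 1" using l unfolding SS_def by auto
    finally show ?thesis .
  qed
  have G1: "0 < G 1" by (rule Gpos) simp
  obtain r :: "nat \<Rightarrow> nat" where r: "strict_mono r" and cr: "\<forall>n::nat. \<forall>\<epsilon>>0. \<exists>J. \<forall>j\<ge>J. \<forall>k\<ge>J.
            (\<integral>\<^sup>+x\<in>cball 0 (real n). ennreal (G \<bar>f (r j) x - f (r k) x\<bar>) \<partial>lebesgue) \<le> ennreal \<epsilon>"
    using diag[where f=f, OF G1 fm fP fS] by blast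
  obtain t :: "nat \<Rightarrow> nat" where t: "strict_mono t" and conv: "AE x in lebesgue. convergent (\<lambda>i. f (r (t i)) x)"
    using ae_conv[OF Gpos, of "\<lambda>k. f (r k)"] cr by auto
  define h where "h i = f (r (t i))" for i
  have hm[measurable]: "h i \<in> borel_measurable lebesgue" for i unfolding h_def by simp
  have ch: "\<forall>n::nat. \<forall>\<epsilon>>0. \<exists>J. \<forall>j\<ge>J. \<forall>k\<ge>J.
            (\<integral>\<^sup>+x\<in>cball 0 (real n). ennreal (G \<bar>h j x - h k x\<bar>) \<partial>lebesgue) \<le> ennreal \<epsilon>"
  proof (intro allI impI)
    fix n :: nat and \<epsilon> :: real assume "\<epsilon> > 0"
    then obtain J where J: "\<forall>j\<ge>J. \<forall>k\<ge>J. (\<integral>\<^sup>+x\<in>cball 0 (real n). ennreal (G \<bar>f (r j) x - f (r k) x\<bar>) \<partial>lebesgue) \<le> ennreal \<epsilon>"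
      using cr by blast
    have "t j \<ge> j" for j using seq_suble[OF t] .
    then show "\<exists>J. \<forall>j\<ge>J. \<forall>k\<ge>J. (\<integral>\<^sup>+x\<in>cball 0 (real n). ennreal (G \<bar>h j x - h k x\<bar>) \<partial>lebesgue) \<le> ennreal \<epsilon>"
      unfolding h_def using J by (meson order_trans)
  qed
  have hP: "Phi G (h k) \<le> 1" for k unfolding h_def by (rule fP)
  have hS: "Psi s G \<delta> (h k) \<le> 1" for k unfolding h_def by (rule fS)
  have conv': "AE x in lebesgue. convergent (\<lambda>i. h i x)" using conv unfolding h_def .
  define z where "z x = lim (\<lambda>i. h i x)" for x
  note lp = limit_props[OF hm hP hS conv' ch, folded z_def]
  have zm[measurable]: "z \<in> borel_measurable lebesgue" using lp(1) .
  define v where "v x = L * z x" for x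
  obtain CL where CL: "CL \<ge> 1" "\<And>t. 0 \<le> t \<Longrightarrow> G (L * t) \<le> CL * G t" using big[of L] L by auto
  have "v \<in> W_sGd s G \<delta>"
  proof -
    have "Phi G v \<le> ennreal CL * Phi G z" unfolding v_def
      by (rule Phi_big[OF zm _ CL(2)]) (use L CL in auto)
    also have "\<dots> \<le> ennreal CL * 1" using lp(2) by (intro mult_left_mono) auto
    finally have P: "Phi G v < \<infinity>" by (simp add: le_less_trans)
    have "Psi s G \<delta> v \<le> ennreal CL * Psi s G \<delta> z" unfolding v_def
      by (rule Psi_big[OF zm CL(2)]) (use L CL in auto)
    also have "\<dots> \<le> ennreal CL * 1" using lp(3) by (intro mult_left_mono) auto
    finally have S: "Psi s G \<delta> v < \<infinity>" by (simp add: le_less_trans)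
    have "v \<in> borel_measurable lebesgue" unfolding v_def by measurable
    then show ?thesis using P S unfolding W_sGd_def LG_def by auto
  qed
  moreover have "(\<lambda>k. lux_norm_on K G (\<lambda>x. u ((r \<circ> t) k) x - v x)) \<longlonglongrightarrow> 0" if K: "compact K" for K
  proof (rule LIMSEQ_I)
    fix \<rho> :: real assume \<rho>: "0 < \<rho>"
    obtain b where b: "b > 0" "\<And>x. x \<in> K \<Longrightarrow> norm x \<le> b"
      using compact_imp_bounded[OF K] unfolding bounded_pos by blast
    define n where "n = nat \<lceil>b\<rceil>"
    have Kn: "K \<subseteq> cball 0 (real n)"
    proof
      fix x assume "x \<in> K"
      then have "norm x \<le> b" using b by auto
      also have "b \<le> real n" unfolding n_def using b by linarith
      finally show "x \<in> cball 0 (real n)" by simp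
    qed
    define \<epsilon> where "\<epsilon> = \<rho> / 2"
    have \<epsilon>: "0 < \<epsilon>" "\<epsilon> < \<rho>" unfolding \<epsilon>_def using \<rho> by auto
    obtain C where C: "C \<ge> 1" "\<And>t. 0 \<le> t \<Longrightarrow> G ((L / \<epsilon>) * t) \<le> C * G t" using big[of "L / \<epsilon>"] L \<epsilon> by auto
    obtain K0 where K0: "\<And>k. k \<ge> K0 \<Longrightarrow> (\<integral>\<^sup>+x\<in>cball 0 (real n). ennreal (G \<bar>h k x - z x\<bar>) \<partial>lebesgue) \<le> ennreal (1 / C)"
      using lp(4) C by (metis divide_pos_pos less_le_trans zero_less_one)
    have cb[measurable]: "cball (0::'a) r \<in> sets lebesgue" for r
      by (rule sets_completionI_sets) (simp add: borel_closed)
    have "norm (lux_norm_on K G (\<lambda>x. u ((r \<circ> t) k) x - v x) - 0) < \<rho>" if k: "k \<ge> K0" for k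
    proof -
      define SK where "SK = {l. l > 0 \<and> Phi_on K G (\<lambda>x. (u ((r \<circ> t) k) x - v x) / l) \<le> 1}"
      have eqf: "(u ((r \<circ> t) k) x - v x) / \<epsilon> = (L / \<epsilon>) * (h k x - z x)" for x
        unfolding h_def f_def v_def using L \<epsilon> by (simp add: field_simps)
      have "Phi_on K G (\<lambda>x. (u ((r \<circ> t) k) x - v x) / \<epsilon>) \<le> Phi_on (cball 0 (real n)) G (\<lambda>x. (L / \<epsilon>) * (h k x - z x))"
        unfolding Phi_on_def eqf using Kn by (intro nn_integral_mono mult_left_mono) (auto simp: indicator_def)
      also have "\<dots> \<le> ennreal C * Phi_on (cball 0 (real n)) G (\<lambda>x. h k x - z x)"
        by (rule Phi_big[OF _ cb C(2)]) (use L \<epsilon> C in auto)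
      also have "\<dots> \<le> ennreal C * ennreal (1 / C)" using K0[OF k] unfolding Phi_on_def by (intro mult_left_mono) auto
      also have "\<dots> = 1" using C by (simp add: ennreal_mult[symmetric])
      finally have eS: "\<epsilon> \<in> SK" unfolding SK_def using \<epsilon> by auto
      have "lux_norm_on K G (\<lambda>x. u ((r \<circ> t) k) x - v x) = Inf SK" unfolding lux_norm_on_def SK_def ..
      moreover have "Inf SK \<le> \<epsilon>" by (rule cInf_lower[OF eS]) (auto simp: SK_def bdd_below_def intro!: exI[of _ 0])
      moreover have "0 \<le> Inf SK" by (rule Inf_nonneg) (use eS in \<open>auto simp: SK_def\<close>)
      ultimately show ?thesis using \<epsilon> by auto
    qed
    then show "\<exists>no. \<forall>k\<ge>no. norm (lux_norm_on K G (\<lambda>x. u ((r \<circ> t) k) x - v x) - 0) < \<rho>" by blast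
  qed
  ultimately show ?thesis using strict_mono_o[OF r t]
    by (intro bexI[of _ v] exI[of _ "r \<circ> t"]) auto
qed

end


theorem theorem2p11:
  fixes G :: "real \<Rightarrow> real" and s \<delta> :: real
    and u :: "nat \<Rightarrow> 'a::euclidean_space \<Rightarrow> real"
  assumes "orlicz_function G" and "\<delta> > 0" and "0 < s" and "s < 1"
    and "\<And>k. u k \<in> W_sGd s G \<delta>"
    and "\<exists>M. \<forall>k. norm_sGd s G \<delta> (u k) \<le> M"
  shows "\<exists>v \<in> W_sGd s G \<delta>. \<exists>r :: nat \<Rightarrow> nat. strict_mono r \<and>
           (\<forall>K. compact K \<longrightarrow>
              (\<lambda>k. lux_norm_on K G (\<lambda>x. u (r k) x - v x)) \<longlonglongrightarrow> 0)"
proof -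
  interpret orl G by unfold_locales (rule assms(1))
  show ?thesis
  proof (cases "\<forall>t\<ge>0. G t = 0")
    case True
    then show ?thesis by (intro degenerate_case) auto
  next
    case False
    then have Gpos: "\<And>t. t > 0 \<Longrightarrow> G t > 0" using degenerate by auto
    interpret fr G s \<delta> by unfold_locales (use assms in auto)
    obtain M where M: "\<And>k. norm_sGd s G \<delta> (u k) \<le> M" using assms(6) by blast
    show ?thesis by (rule main_nondeg[OF Gpos assms(5) M])
  qed
qed


end
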